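(* Under the standing parameter and boundedness assumptions (A1)–(A3) below, there exists $C>0$ such that the extended iterates $(X')^k$ of the 3-splitting proximal point ADMM satisfy $$\mathcal{L}((X')^k)\le\mathcal{L}((X')^{k-1})-C\|(X')^k-(X')^{k-1}\|_F^2\quad\text{for all }k\ge2.$$
   Context: Data $X\in\mathbb{R}^{d\times n}$, $Y\in\mathbb{R}^{q\times n}$, $N\ge3$, $\lambda,\mu>0$, $\beta_1,\dots,\beta_N>0$. Activations $\sigma_i$ ($i\le N-1$) real analytic with $|\sigma_i|\le\psi_0,|\sigma_i'|\le\psi_1,|\sigma_i''|\le\psi_2$ on $\mathbb{R}$ ($\psi_j>0$), applied entrywise. $\|\cdot\|_F$ Frobenius norm, $\langle A,B\rangle=\mathrm{tr}(AB^T)$, $V_0:=X$. Variables $W_i\in\mathbb{R}^{d\times d}$, $U_i,V_i,\Lambda_i\in\mathbb{R}^{d\times n}$ ($i\le N-1$), $W_N\in\mathbb{R}^{q\times d}$, $V_N,\Lambda_N\in\mathbb{R}^{q\times n}$. $\mathcal{L}_\beta^{3s}=\tfrac12\|V_N-Y\|_F^2+\tfrac\lambda2\sum_{i=1}^N\|W_i\|_F^2+\tfrac\mu2\sum_{i=1}^{N-1}\|V_{i-1}+\sigma_i(U_i)-V_i\|_F^2+\sum_{i=1}^{N-1}(\langle\Lambda_i,W_iV_{i-1}-U_i\rangle+\tfrac{\beta_i}2\|W_iV_{i-1}-U_i\|_F^2)+\langle\Lambda_N,W_NV_{N-1}-V_N\rangle+\tfrac{\beta_N}2\|W_NV_{N-1}-V_N\|_F^2$.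 3-splitting proximal point ADMM: arbitrary $W_i^0$; $U_i^0=W_i^0V_{i-1}^0$, $V_i^0=V_{i-1}^0+\sigma_i(U_i^0)$ ($i\le N-1$), $V_N^0=W_N^0V_{N-1}^0$, $\Lambda_i^0=O$; positive parameters $\omega_i^k$. For $k\ge1$: (a) $W_i^k=\arg\min_{W_i}\{\tfrac\lambda2\|W_i\|_F^2+\tfrac{\beta_i}2\|W_iV_{i-1}^{k-1}-U_i^{k-1}+\Lambda_i^{k-1}/\beta_i\|_F^2\}$ ($i\le N-1$) and $W_N^k=\arg\min\{\tfrac\lambda2\|W_N\|_F^2+\tfrac{\beta_N}2\|W_NV_{N-1}^{k-1}-V_N^{k-1}+\Lambda_N^{k-1}/\beta_N\|_F^2\}$; (b) for $i=1,\dots,N-1$ in order: $U_i^k$ is a (fixed) minimizer of $\tfrac\mu2\|V_{i-1}^k+\sigma_i(U_i)-V_i^{k-1}\|_F^2+\tfrac{\beta_i}2\|U_i-W_i^kV_{i-1}^k-\Lambda_i^{k-1}/\beta_i\|_F^2+\tfrac{\omega_i^{k-1}}2\|U_i-U_i^{k-1}\|_F^2$; then, if $i\le N-2$, $V_i^k=\arg\min_{V_i}\{\tfrac\mu2\|V_{i-1}^k+\sigma_i(U_i^k)-V_i\|_F^2+\tfrac\mu2\|V_i+\sigma_{i+1}(U_{i+1}^{k-1})-V_{i+1}^{k-1}\|_F^2+\tfrac{\beta_{i+1}}2\|W_{i+1}^kV_i-U_{i+1}^{k-1}+\Lambda_{i+1}^{k-1}/\beta_{i+1}\|_F^2\}$,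 and if $i=N-1$, $V_{N-1}^k=\arg\min\{\tfrac\mu2\|V_{N-1}-V_{N-2}^k-\sigma_{N-1}(U_{N-1}^k)\|_F^2+\tfrac{\beta_N}2\|W_N^kV_{N-1}-V_N^{k-1}+\Lambda_N^{k-1}/\beta_N\|_F^2\}$; (c) $V_N^k=\frac1{1+\beta_N}(Y+\beta_NW_N^kV_{N-1}^k+\Lambda_N^{k-1})$; (d) $\Lambda_i^k=\Lambda_i^{k-1}+\beta_i(W_i^kV_{i-1}^k-U_i^k)$ ($i\le N-1$), $\Lambda_N^k=\Lambda_N^{k-1}+\beta_N(W_N^kV_{N-1}^k-V_N^k)$. Assumptions: fix $\mathcal{V}_0^{\max}>\|X\|_F$ and $\mathcal{V}_1^{\max},\dots,\mathcal{V}_{N-1}^{\max}>0$; let $a_i:=\psi_0\psi_2+\psi_1^2+\mathcal{V}_i^{\max}\psi_2+\mathcal{V}_{i-1}^{\max}\psi_2$. (A1) $\beta_i>\max\{32(1+\sqrt2)\mu a_i,\,16\mu\psi_1^2\}$ for $i\le N-1$, and $\beta_N>1$. (A2) With $\Delta_i:=(\beta_i/4-8\mu a_i)^2-128\mu^2a_i^2$, $\hat\epsilon_i\in(0,\sqrt{\Delta_i}/32)$, $\omega_i^{\min}:=\frac{\beta_i/4-8\mu a_i-\sqrt{\Delta_i}}{16}+\hat\epsilon_i$, $\epsilon_i\in(0,\omega_i^{\min}/4)$, $\omega_i^{\max}:=\min\{\frac{\beta_i/4-8\mu a_i+\sqrt{\Delta_i}}{16}-\hat\epsilon_i,\ \sqrt{(\omega_i^{\min})^2+\beta_i\omega_i^{\min}/16-\beta_i\epsilon_i/4}\}$,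 the parameters satisfy $\omega_i^{\min}<\omega_i^k\le\omega_i^{k+1}<\omega_i^{\max}$ for all $k\ge0$, $i\le N-1$. (A3) The generated iterates satisfy $\|V_i^k\|_F\le\mathcal{V}_i^{\max}$ for all $i\le N-1$, $k\ge0$. Auxiliary function: for $X=(\{W_i\},\{U_i\},\{V_i\},\{\Lambda_i\})$ and extra blocks $U_i',V_i'\in\mathbb{R}^{d\times n}$ ($i\le N-1$), $X'=(X,\{U_i'\},\{V_i'\})$ and $\mathcal{L}(X'):=\mathcal{L}_\beta^{3s}(X)+\sum_{i=1}^{N-1}\theta_i\|U_i-U_i'\|_F^2+\sum_{i=1}^{N-1}\eta_i\|V_i-V_i'\|_F^2$, with $\theta_i:=4(\omega_i^{\min})^2/\beta_i+\omega_i^{\min}/4$, $\eta_i:=4\mu^2\psi_1^2/\beta_i+\mu/4$. Extended iterates: $(X')^k:=(X^k,\{U_i^{k-1}\},\{V_i^{k-1}\})$ for $k\ge1$, where $X^k$ collects all blocks at iteration $k$; norms are Frobenius norms of the concatenated blocks. *)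

theory Defs
  imports "HOL-Analysis.Analysis"
begin

text \<open>Matrices in R^{m x n} are rendered as real^'n^'m (rows indexed by 'm).
  The HOL-Analysis norm on this type is the Frobenius norm and the inner
  product A \<bullet> B is tr(A B^T).\<close>

definition ent :: "(real \<Rightarrow> real) \<Rightarrow> real^'n^'m \<Rightarrow> real^'n^'m" where
  "ent f A = (\<chi> i j. f (A $ i $ j))"

definition real_analytic :: "(real \<Rightarrow> real) \<Rightarrow> bool" where
  "real_analytic f \<longleftrightarrow> (\<forall>x. \<exists>r>0. \<exists>c::nat \<Rightarrow> real.
      \<forall>y. \<bar>y - x\<bar> < r \<longrightarrow> (\<lambda>k. c k * (y - x) ^ k) sums f y)"

text \<open>The augmented Lagrangian L_beta^{3s}. The block V 0 plays the role of V_0 = X.\<close>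
definition L3s ::
  "nat \<Rightarrow> real^'n^'q \<Rightarrow> real \<Rightarrow> real \<Rightarrow> (nat \<Rightarrow> real) \<Rightarrow> (nat \<Rightarrow> real \<Rightarrow> real)
   \<Rightarrow> (nat \<Rightarrow> real^'d^'d) \<Rightarrow> real^'d^'q
   \<Rightarrow> (nat \<Rightarrow> real^'n^'d) \<Rightarrow> (nat \<Rightarrow> real^'n^'d) \<Rightarrow> real^'n^'q
   \<Rightarrow> (nat \<Rightarrow> real^'n^'d) \<Rightarrow> real^'n^'q \<Rightarrow> real" where
  "L3s N Y lam mu beta act W WN U V VN Lam LamN =
     1/2 * (norm (VN - Y))^2
   + lam/2 * ((\<Sum>i=1..N-1. (norm (W i))^2) + (norm WN)^2)
   + mu/2 * (\<Sum>i=1..N-1. (norm (V (i-1) + ent (act i) (U i) - V i))^2)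
   + (\<Sum>i=1..N-1. Lam i \<bullet> (W i ** V (i-1) - U i)
        + beta i / 2 * (norm (W i ** V (i-1) - U i))^2)
   + LamN \<bullet> (WN ** V (N-1) - VN) + beta N / 2 * (norm (WN ** V (N-1) - VN))^2"

definition Lext ::
  "nat \<Rightarrow> real^'n^'q \<Rightarrow> real \<Rightarrow> real \<Rightarrow> (nat \<Rightarrow> real) \<Rightarrow> (nat \<Rightarrow> real \<Rightarrow> real)
   \<Rightarrow> (nat \<Rightarrow> real) \<Rightarrow> (nat \<Rightarrow> real)
   \<Rightarrow> (nat \<Rightarrow> real^'d^'d) \<Rightarrow> real^'d^'q
   \<Rightarrow> (nat \<Rightarrow> real^'n^'d) \<Rightarrow> (nat \<Rightarrow> real^'n^'d) \<Rightarrow> real^'n^'q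
   \<Rightarrow> (nat \<Rightarrow> real^'n^'d) \<Rightarrow> real^'n^'q
   \<Rightarrow> (nat \<Rightarrow> real^'n^'d) \<Rightarrow> (nat \<Rightarrow> real^'n^'d) \<Rightarrow> real" where
  "Lext N Y lam mu beta act theta eta W WN U V VN Lam LamN U' V' =
     L3s N Y lam mu beta act W WN U V VN Lam LamN
   + (\<Sum>i=1..N-1. theta i * (norm (U i - U' i))^2)
   + (\<Sum>i=1..N-1. eta i * (norm (V i - V' i))^2)"

definition a_par :: "real \<Rightarrow> real \<Rightarrow> real \<Rightarrow> (nat \<Rightarrow> real) \<Rightarrow> nat \<Rightarrow> real" where
  "a_par psi0 psi1 psi2 Vmax i =
     psi0 * psi2 + psi1^2 + Vmax i * psi2 + Vmax (i-1) * psi2"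

definition Delta_par :: "real \<Rightarrow> real \<Rightarrow> real \<Rightarrow> real" where
  "Delta_par beta_i mu a_i = (beta_i/4 - 8*mu*a_i)^2 - 128*mu^2*a_i^2"

definition omega_min :: "real \<Rightarrow> real \<Rightarrow> real \<Rightarrow> real \<Rightarrow> real" where
  "omega_min beta_i mu a_i heps_i =
     (beta_i/4 - 8*mu*a_i - sqrt (Delta_par beta_i mu a_i))/16 + heps_i"

definition omega_max :: "real \<Rightarrow> real \<Rightarrow> real \<Rightarrow> real \<Rightarrow> real \<Rightarrow> real" where
  "omega_max beta_i mu a_i heps_i eps_i =
     min ((beta_i/4 - 8*mu*a_i + sqrt (Delta_par beta_i mu a_i))/16 - heps_i)
         (sqrt ((omega_min beta_i mu a_i heps_i)^2
                + beta_i * omega_min beta_i mu a_i heps_i / 16 - beta_i * eps_i / 4))"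

end

theory Submission
  imports Defs
begin


lemma analytic_diff:
  assumes "real_analytic f"
  shows "\<forall>x. (f has_real_derivative deriv f x) (at x)"
    and "\<forall>x. (deriv f has_real_derivative deriv (deriv f) x) (at x)"
proof -
  have loc: "\<exists>r>0. \<exists>c. (\<forall>y. \<bar>y - x\<bar> < r \<longrightarrow>
       (f has_real_derivative (\<Sum>n. diffs c n * (y - x)^n)) (at y))
     \<and> (\<forall>z. \<bar>z\<bar> < r \<longrightarrow> summable (\<lambda>n. diffs c n * z ^ n))" for x
  proof -
    obtain r c where r: "r > 0" and sm: "\<forall>y. \<bar>y - x\<bar> < r \<longrightarrow> (\<lambda>k. c k * (y - x) ^ k) sums f y"
      using assms unfolding real_analytic_def by blast
    have smz: "summable (\<lambda>n. c n * z ^ n)" if "norm z < r" for z :: real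
      using sm[rule_format, of "z + x"] that by (auto simp: sums_iff)
    have "\<forall>y. \<bar>y - x\<bar> < r \<longrightarrow> (f has_real_derivative (\<Sum>n. diffs c n * (y - x)^n)) (at y)"
    proof (intro allI impI)
      fix y assume y: "\<bar>y - x\<bar> < r"
      have d: "((\<lambda>z. \<Sum>n. c n * z^n) has_field_derivative (\<Sum>n. diffs c n * (y-x)^n)) (at (y - x))"
        by (rule termdiffs_strong'[of r]) (use smz y in auto)
      have d2: "((\<lambda>t. \<Sum>n. c n * (t - x)^n) has_field_derivative (\<Sum>n. diffs c n * (y-x)^n)) (at y)"
        using DERIV_shift[of "\<lambda>z. \<Sum>n. c n * z^n" _ y "-x"] d by simp
      show "(f has_real_derivative (\<Sum>n. diffs c n * (y - x)^n)) (at y)"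
      proof (rule has_field_derivative_transform_within_open[OF d2, of "ball x r"])
        show "open (ball x r)" by simp
        show "y \<in> ball x r" using y by (simp add: dist_real_def abs_minus_commute)
        fix t assume "t \<in> ball x r"
        then have "\<bar>t - x\<bar> < r" by (simp add: dist_real_def abs_minus_commute)
        then show "(\<Sum>n. c n * (t - x)^n) = f t" using sm by (simp add: sums_iff)
      qed
    qed
    moreover have "\<forall>z. \<bar>z\<bar> < r \<longrightarrow> summable (\<lambda>n. diffs c n * z ^ n)"
      using termdiff_converges[of _ r c] smz by auto
    ultimately show ?thesis using r by blast
  qed
  have D1: "(f has_real_derivative deriv f x) (at x)" for x
  proof -
    obtain r c where r: "r > 0" and d: "\<forall>y. \<bar>y - x\<bar> < r \<longrightarrow>
       (f has_real_derivative (\<Sum>n. diffs c n * (y - x)^n)) (at y)" using loc by blast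
    from d[rule_format, of x] r have "(f has_real_derivative (\<Sum>n. diffs c n * (x - x)^n)) (at x)" by simp
    then show ?thesis using DERIV_imp_deriv by metis
  qed
  then show "\<forall>x. (f has_real_derivative deriv f x) (at x)" by blast
  show "\<forall>x. (deriv f has_real_derivative deriv (deriv f) x) (at x)"
  proof
    fix x
    obtain r c where r: "r > 0" and d: "\<forall>y. \<bar>y - x\<bar> < r \<longrightarrow>
       (f has_real_derivative (\<Sum>n. diffs c n * (y - x)^n)) (at y)"
       and sm: "\<forall>z. \<bar>z\<bar> < r \<longrightarrow> summable (\<lambda>n. diffs c n * z ^ n)" using loc by blast
    have eq: "deriv f y = (\<Sum>n. diffs c n * (y - x)^n)" if "\<bar>y - x\<bar> < r" for y
      using d that DERIV_imp_deriv by blast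
    have dd: "((\<lambda>z. \<Sum>n. diffs c n * z^n) has_field_derivative (\<Sum>n. diffs (diffs c) n * (x-x)^n)) (at (x - x))"
      by (rule termdiffs_strong'[of r]) (use sm r in auto)
    have d2: "((\<lambda>t. \<Sum>n. diffs c n * (t - x)^n) has_field_derivative (\<Sum>n. diffs (diffs c) n * (x-x)^n)) (at x)"
      using DERIV_shift[of "\<lambda>z. \<Sum>n. diffs c n * z^n" _ x "-x"] dd by simp
    have "(deriv f has_field_derivative (\<Sum>n. diffs (diffs c) n * (x-x)^n)) (at x)"
    proof (rule has_field_derivative_transform_within_open[OF d2, of "ball x r"])
      show "open (ball x r)" by simp
      show "x \<in> ball x r" using r by simp
      fix t assume "t \<in> ball x r"
      then have "\<bar>t - x\<bar> < r" by (simp add: dist_real_def abs_minus_commute)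
      then show "(\<Sum>n. diffs c n * (t - x)^n) = deriv f t" using eq by simp
    qed
    then show "(deriv f has_real_derivative deriv (deriv f) x) (at x)" using DERIV_imp_deriv by metis
  qed
qed

lemma lip_from_deriv:
  fixes g g' :: "real \<Rightarrow> real"
  assumes "\<forall>x. (g has_real_derivative g' x) (at x)" and "\<forall>x. \<bar>g' x\<bar> \<le> M"
  shows "\<bar>g a - g b\<bar> \<le> M * \<bar>a - b\<bar>"
proof -
  have gen: "\<bar>g y - g x\<bar> \<le> M * (y - x)" if xy: "x < y" for x y
  proof -
    have "continuous_on {x..y} g"
      using assms(1) by (meson DERIV_continuous continuous_at_imp_continuous_on)
    moreover have "\<And>t. g differentiable (at t)" using assms(1) real_differentiable_def by blast
    ultimately obtain l z where "DERIV g z :> l" "g y - g x = (y - x) * l"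
      using MVT[OF xy, of g] by blast
    moreover have "l = g' z" using assms(1) \<open>DERIV g z :> l\<close> DERIV_unique by blast
    ultimately have "\<bar>g y - g x\<bar> = (y - x) * \<bar>g' z\<bar>" using that by (simp add: abs_mult)
    also have "\<dots> \<le> (y - x) * M" using assms(2) that by (intro mult_left_mono) auto
    finally show ?thesis by (simp add: mult.commute)
  qed
  show ?thesis
  proof (cases a b rule: linorder_cases)
    case less then show ?thesis using gen[OF less] by (simp add: abs_minus_commute)
  next
    case greater then show ?thesis using gen[OF greater] by simp
  qed simp
qed



lemma mm_add_r: "((A::real^'n^'m) + B) ** C = A ** C + B ** C"
  by (simp add: matrix_matrix_mult_def vec_eq_iff sum.distrib algebra_simps)
lemma mm_diff_r: "((A::real^'n^'m) - B) ** C = A ** C - B ** C"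
  by (simp add: matrix_matrix_mult_def vec_eq_iff sum_subtractf algebra_simps)
lemma mm_diff_l: "(A::real^'n^'m) ** (B - C) = A ** B - A ** C"
  by (simp add: matrix_matrix_mult_def vec_eq_iff sum_subtractf algebra_simps)
lemma mm_scale_r: "(k *\<^sub>R (A::real^'n^'m)) ** C = k *\<^sub>R (A ** C)"
  by (simp add: matrix_matrix_mult_def vec_eq_iff sum_distrib_left algebra_simps)
lemma mm_scale_l: "(A::real^'n^'m) ** (k *\<^sub>R C) = k *\<^sub>R (A ** C)"
  by (simp add: matrix_matrix_mult_def vec_eq_iff sum_distrib_left algebra_simps)

definition sconv :: "real \<Rightarrow> ('a::real_inner \<Rightarrow> real) \<Rightarrow> bool" where
  "sconv m f \<longleftrightarrow> (\<forall>x y t. 0 \<le> t \<and> t \<le> 1 \<longrightarrow>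
     f ((1-t) *\<^sub>R x + t *\<^sub>R y) \<le> (1-t) * f x + t * f y - m/2 * t * (1-t) * (norm (x-y))^2)"

lemma sconv_add: "sconv m f \<Longrightarrow> sconv m' g \<Longrightarrow> sconv (m+m') (\<lambda>z. f z + g z)"
  unfolding sconv_def
proof (intro allI impI)
  fix x y :: 'a and t :: real
  assume f: "\<forall>x y t. 0 \<le> t \<and> t \<le> 1 \<longrightarrow>
     f ((1-t) *\<^sub>R x + t *\<^sub>R y) \<le> (1-t) * f x + t * f y - m/2 * t * (1-t) * (norm (x-y))^2"
    and g: "\<forall>x y t. 0 \<le> t \<and> t \<le> 1 \<longrightarrow>
     g ((1-t) *\<^sub>R x + t *\<^sub>R y) \<le> (1-t) * g x + t * g y - m'/2 * t * (1-t) * (norm (x-y))^2"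
    and t: "0 \<le> t \<and> t \<le> 1"
  show "f ((1-t) *\<^sub>R x + t *\<^sub>R y) + g ((1-t) *\<^sub>R x + t *\<^sub>R y)
      \<le> (1-t) * (f x + g x) + t * (f y + g y) - (m+m')/2 * t * (1-t) * (norm (x-y))^2"
  proof -
    have e: "(m+m')/2 * t * (1-t) * (norm (x-y))^2 = m/2 * t * (1-t) * (norm (x-y))^2 + m'/2 * t * (1-t) * (norm (x-y))^2"
      by (simp only: add_divide_distrib distrib_right)
    show ?thesis
      using f[rule_format, OF t, of x y] g[rule_format, OF t, of x y] e distrib_left[of "1-t" "f x" "g x"] distrib_left[of t "f y" "g y"] by linarith
  qed
qed

lemma norm_combo:
  fixes p q :: "'a::real_inner"
  shows "(norm ((1-t) *\<^sub>R p + t *\<^sub>R q))^2 = (1-t) * (norm p)^2 + t * (norm q)^2 - t * (1-t) * (norm (p-q))^2"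
  by (simp add: power2_norm_eq_inner inner_add_left inner_add_right inner_diff_left inner_diff_right
      inner_commute algebra_simps)

lemma sconv_sq:
  fixes g :: "'a::real_inner \<Rightarrow> 'b::real_inner"
  assumes aff: "\<And>x y t. g ((1-t) *\<^sub>R x + t *\<^sub>R y) = (1-t) *\<^sub>R g x + t *\<^sub>R g y"
    and s: "\<And>x y. s * (norm (x-y))^2 \<le> (norm (g x - g y))^2"
    and c: "c \<ge> 0"
  shows "sconv (c * s) (\<lambda>z. c/2 * (norm (g z))^2)"
  unfolding sconv_def
proof (intro allI impI)
  fix x y :: 'a
  fix t :: real
  assume t: "0 \<le> t \<and> t \<le> 1"
  have "t * (1-t) * (c * s * (norm (x-y))^2) \<le> t * (1-t) * (c * (norm (g x - g y))^2)"
    using t c s[of x y] by (intro mult_left_mono) (auto simp: mult.assoc intro: mult_left_mono)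
  moreover have "c/2 * (norm (g ((1-t) *\<^sub>R x + t *\<^sub>R y)))^2
     = (1-t) * (c/2 * (norm (g x))^2) + t * (c/2 * (norm (g y))^2) - c/2 * t * (1-t) * (norm (g x - g y))^2"
    unfolding aff norm_combo by (simp add: field_simps)
  moreover have "c * s/2 * t * (1-t) * (norm (x-y))^2 = (t * (1-t) * (c * s * (norm (x-y))^2))/2"
    "c/2 * t * (1-t) * (norm (g x - g y))^2 = (t * (1-t) * (c * (norm (g x - g y))^2))/2"
    by (simp_all add: algebra_simps)
  ultimately show "c/2 * (norm (g ((1-t) *\<^sub>R x + t *\<^sub>R y)))^2
     \<le> (1-t) * (c/2 * (norm (g x))^2) + t * (c/2 * (norm (g y))^2) - c * s/2 * t * (1-t) * (norm (x-y))^2"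
    by linarith
qed

lemma sconv_min:
  assumes sc: "sconv m f" and m: "m \<ge> 0" and mn: "\<forall>z. f z0 \<le> f z"
  shows "f x - f z0 \<ge> m/2 * (norm (x - z0))^2"
proof -
  define K where "K = m/2 * (norm (x - z0))^2"
  define E where "E = f x - f z0"
  have K0: "K \<ge> 0" using m by (simp add: K_def)
  have key: "E \<ge> K * (1-t)" if t: "0 < t" "t \<le> 1" for t
  proof -
    have "f z0 \<le> f ((1-t) *\<^sub>R z0 + t *\<^sub>R x)" using mn by blast
    also have "\<dots> \<le> (1-t) * f z0 + t * f x - m/2 * t * (1-t) * (norm (z0-x))^2"
      using sc t unfolding sconv_def by auto
    finally have "t * (K * (1-t)) \<le> t * E"
      by (simp add: K_def E_def norm_minus_commute algebra_simps)
    then show ?thesis using t by simp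
  qed
  show ?thesis
  proof (rule ccontr)
    assume "\<not> ?thesis"
    then have EK: "E < K" by (simp add: K_def E_def)
    have E0: "E \<ge> 0" using key[of 1] by simp
    define t where "t = (K - E) / (2*K)"
    have Kp: "K > 0" using EK E0 by simp
    have "0 < t" "t \<le> 1" using EK E0 Kp by (auto simp: t_def field_simps)
    from key[OF this] have "E \<ge> K - (K - E)/2" using Kp by (simp add: t_def field_simps)
    then show False using EK by (simp add: field_simps)
  qed
qed

lemma aff_id: "(\<lambda>z::'a::real_vector. z + b) ((1-t) *\<^sub>R x + t *\<^sub>R y) = (1-t) *\<^sub>R (x + b) + t *\<^sub>R (y + b)"
  by (simp add: algebra_simps)

lemma aff_mr: "((1-t) *\<^sub>R x + t *\<^sub>R y) ** (V::real^'n^'d) + (b::real^'n^'m) = (1-t) *\<^sub>R (x ** V + b) + t *\<^sub>R (y ** V + b)"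
  by (simp only: mm_add_r mm_scale_r) (simp add: algebra_simps)

lemma aff_ml: "(W::real^'d^'m) ** ((1-t) *\<^sub>R x + t *\<^sub>R y) + (b::real^'n^'m) = (1-t) *\<^sub>R (W ** x + b) + t *\<^sub>R (W ** y + b)"
  by (simp only: matrix_add_ldistrib mm_scale_l) (simp add: algebra_simps)



lemma ent_nth[simp]: "ent f A $ a $ b = f (A $ a $ b)"
  by (simp add: ent_def)

lemma norm_sq_entries: "(norm (A::real^'n^'m))^2 = (\<Sum>a\<in>UNIV. \<Sum>b\<in>UNIV. (A$a$b)^2)"
  unfolding power2_norm_eq_inner inner_vec_def by (simp add: power2_eq_square)

lemma entry_le_norm: "\<bar>(A::real^'n^'m)$a$b\<bar> \<le> norm A"
proof -
  have "\<bar>A$a$b\<bar> \<le> norm (A$a)" by (metis component_le_norm_cart real_norm_def)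
  also have "\<dots> \<le> norm A" by (rule Finite_Cartesian_Product.norm_nth_le)
  finally show ?thesis .
qed

lemma norm_mono_entries:
  assumes "\<And>a b. \<bar>(x::real^'n^'m)$a$b\<bar> \<le> y$a$b"
  shows "norm x \<le> norm y"
proof -
  have "(norm x)^2 \<le> (norm y)^2"
    unfolding norm_sq_entries
  proof (intro sum_mono)
    fix a b
    show "(x$a$b)^2 \<le> (y$a$b)^2" using assms[of a b]
      by (metis abs_ge_zero abs_le_square_iff dual_order.trans power2_abs abs_of_nonneg) 
  qed
  then show ?thesis by (simp add: power_mono_iff)
qed

lemma norm_abs_mat: "norm (\<chi> a b. \<bar>(x::real^'n^'m)$a$b\<bar>) = norm x"
proof -
  have "(norm (\<chi> a b. \<bar>(x::real^'n^'m)$a$b\<bar>))^2 = (norm x)^2"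
    unfolding norm_sq_entries by simp
  then show ?thesis by (simp add: power2_eq_iff_nonneg)
qed

lemma norm_entry_bound4:
  fixes x p q r s :: "real^'n^'m"
  assumes "\<And>a b. \<bar>x$a$b\<bar> \<le> \<alpha> * \<bar>p$a$b\<bar> + \<beta> * \<bar>q$a$b\<bar> + \<gamma> * \<bar>r$a$b\<bar> + \<delta> * \<bar>s$a$b\<bar>"
    and "\<alpha> \<ge> 0" "\<beta> \<ge> 0" "\<gamma> \<ge> 0" "\<delta> \<ge> 0"
  shows "norm x \<le> \<alpha> * norm p + \<beta> * norm q + \<gamma> * norm r + \<delta> * norm s"
proof -
  define P where "P = (\<chi> a b. \<bar>p$a$b\<bar>)"
  define Q where "Q = (\<chi> a b. \<bar>q$a$b\<bar>)"
  define R where "R = (\<chi> a b. \<bar>r$a$b\<bar>)"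
  define S where "S = (\<chi> a b. \<bar>s$a$b\<bar>)"
  have "norm x \<le> norm (\<alpha> *\<^sub>R P + \<beta> *\<^sub>R Q + \<gamma> *\<^sub>R R + \<delta> *\<^sub>R S)"
    by (rule norm_mono_entries) (use assms in \<open>simp add: P_def Q_def R_def S_def\<close>)
  also have "\<dots> \<le> norm (\<alpha> *\<^sub>R P) + norm (\<beta> *\<^sub>R Q) + norm (\<gamma> *\<^sub>R R) + norm (\<delta> *\<^sub>R S)"
    by (meson add_mono norm_triangle_ineq order_trans order_refl)
  also have "\<dots> = \<alpha> * norm p + \<beta> * norm q + \<gamma> * norm r + \<delta> * norm s"
    using assms(2-5) by (simp add: P_def Q_def R_def S_def norm_abs_mat)
  finally show ?thesis .
qed

lemma sum_single_entry:
  fixes F :: "'m::finite \<Rightarrow> 'n::finite \<Rightarrow> real"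
  shows "(\<Sum>a'\<in>UNIV. \<Sum>b'\<in>(UNIV::'n set). if a' = a \<and> b' = b then F a' b' else 0) = F a b"
proof -
  have "(\<Sum>a'\<in>(UNIV::'m set). \<Sum>b'\<in>(UNIV::'n set). if a' = a \<and> b' = b then F a' b' else 0)
      = (\<Sum>a'\<in>(UNIV::'m set). if a' = a then F a' b else 0)"
    by (intro sum.cong refl) (auto simp: sum.delta)
  also have "\<dots> = F a b" by (simp add: sum.delta)
  finally show ?thesis .
qed

lemma U_stationary:
  fixes A B U U0 P Q :: "real^'n^'m"
  assumes min: "\<forall>Z. mu/2 * (norm (A + ent sig U - B))^2 + bt/2 * (norm (U - P - Q))^2 + om/2 * (norm (U - U0))^2
      \<le> mu/2 * (norm (A + ent sig Z - B))^2 + bt/2 * (norm (Z - P - Q))^2 + om/2 * (norm (Z - U0))^2"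
    and d: "\<forall>x. (sig has_real_derivative sig' x) (at x)"
  shows "mu * sig' (U$a$b) * (A$a$b + sig (U$a$b) - B$a$b) + bt * (U$a$b - P$a$b - Q$a$b) + om * (U$a$b - U0$a$b) = 0"
proof -
  define psi where "psi = (\<lambda>a b z. mu/2 * (A$a$b + sig z - B$a$b)^2 + bt/2 * (z - P$a$b - Q$a$b)^2 + om/2 * (z - U0$a$b)^2)"
  define F where "F = (\<lambda>Z::real^'n^'m. mu/2 * (norm (A + ent sig Z - B))^2 + bt/2 * (norm (Z - P - Q))^2 + om/2 * (norm (Z - U0))^2)"
  have Fs: "F Z = (\<Sum>a'\<in>UNIV. \<Sum>b'\<in>UNIV. psi a' b' (Z$a'$b'))" for Z
    unfolding F_def psi_def norm_sq_entries
    by (simp add: sum.distrib sum_distrib_left)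
  define Zz where "Zz = (\<lambda>z. (\<chi> a' b'. if a' = a \<and> b' = b then z else U$a'$b') :: real^'n^'m)"
  have "F (Zz z) - F U = psi a b z - psi a b (U$a$b)" for z
  proof -
    have "F (Zz z) - F U = (\<Sum>a'\<in>UNIV. \<Sum>b'\<in>UNIV. psi a' b' (Zz z$a'$b') - psi a' b' (U$a'$b'))"
      unfolding Fs by (simp add: sum_subtractf)
    also have "\<dots> = (\<Sum>a'\<in>UNIV. \<Sum>b'\<in>UNIV. if a' = a \<and> b' = b then psi a' b' z - psi a' b' (U$a'$b') else 0)"
      by (intro sum.cong refl) (auto simp: Zz_def)
    also have "\<dots> = psi a b z - psi a b (U$a$b)"
      by (rule sum_single_entry)
    finally show ?thesis .
  qed
  moreover have "F U \<le> F (Zz z)" for z using min unfolding F_def by blast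
  ultimately have mn: "psi a b (U$a$b) \<le> psi a b z" for z by (metis diff_ge_0_iff_ge)
  have der: "(psi a b has_real_derivative
      (mu * sig' (U$a$b) * (A$a$b + sig (U$a$b) - B$a$b) + bt * (U$a$b - P$a$b - Q$a$b) + om * (U$a$b - U0$a$b))) (at (U$a$b))"
    unfolding psi_def
    by (rule derivative_eq_intros d[rule_format] refl | simp)+ (simp add: field_simps)
  show ?thesis
    by (rule DERIV_local_min[OF der, of 1]) (use mn in auto)
qed



definition Qt :: "real \<Rightarrow> 'a::real_inner \<Rightarrow> 'a \<Rightarrow> real" where
  "Qt b L x = inner L x + b/2 * (norm x)^2"

lemma Qt_alt: "b > 0 \<Longrightarrow> Qt b L x = b/2 * (norm (x + (1/b) *\<^sub>R L))^2 - (norm L)^2/(2*b)"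
  unfolding Qt_def power2_norm_eq_inner
  by (simp add: inner_add_left inner_add_right inner_commute field_simps)

lemma Qt_alt2: "b > 0 \<Longrightarrow> Qt b L (P - Z) = b/2 * (norm (Z - P - (1/b) *\<^sub>R L))^2 - (norm L)^2/(2*b)"
proof -
  assume b: "b > 0"
  have "norm (P - Z + (1/b) *\<^sub>R L) = norm (Z - P - (1/b) *\<^sub>R L)"
    by (metis minus_diff_eq norm_minus_cancel diff_diff_eq2 diff_minus_eq_add minus_diff_minus add.commute)
  then show ?thesis using Qt_alt[OF b, of L "P - Z"] by simp
qed

lemma Qt_dual: fixes x Lo Ln :: "'a::real_inner" shows "b > 0 \<Longrightarrow> Ln = Lo + b *\<^sub>R x \<Longrightarrow> Qt b Ln x = Qt b Lo x + (norm (Ln - Lo))^2 / b"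
  unfolding Qt_def power2_norm_eq_inner
  by (simp add: inner_add_left inner_add_right field_simps power2_eq_square)

lemma VN_exact:
  fixes Y P L Z Zs :: "'a::real_inner"
  assumes h: "(1+b) *\<^sub>R Zs = Y + b *\<^sub>R P + L"
  shows "1/2 * (norm (Z - Y))^2 + Qt b L (P - Z) - (1/2 * (norm (Zs - Y))^2 + Qt b L (P - Zs))
       = (1+b)/2 * (norm (Z - Zs))^2"
proof -
  have h0: "inner ((1+b) *\<^sub>R Zs - Y - b *\<^sub>R P - L) (Z - Zs) = 0" using h by simp
  then show ?thesis
    unfolding Qt_def power2_norm_eq_inner
    by (simp add: inner_add_left inner_add_right inner_diff_left inner_diff_right inner_commute field_simps)
qed


lemma param_facts:
  fixes b mu a h e om0 om1 th :: real
  assumes mu: "mu > 0" and a: "a \<ge> 0" and b: "b > 32 * (1 + sqrt 2) * mu * a" and bp: "b > 0"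
    and h: "0 < h" "h < sqrt (Delta_par b mu a) / 32"
    and e: "0 < e" "e < om0 / 4"
    and om0_def: "om0 = omega_min b mu a h"
    and om1_def: "om1 = omega_max b mu a h e"
    and th_def: "th = 4 * om0^2 / b + om0 / 4"
  shows "om0 > 0"
    and "\<And>w. om0 < w \<Longrightarrow> w < om1 \<Longrightarrow> th - w/2 + 4 * (mu*a + w)^2 / b \<le> - 8 * h^2 / b"
    and "\<And>w. 0 \<le> w \<Longrightarrow> w < om1 \<Longrightarrow> 4 * w^2 / b - th \<le> - e"
proof -
  define B where "B = b/4 - 8*mu*a"
  define D where "D = Delta_par b mu a"
  have s2: "sqrt 2 \<ge> 1" by simp
  have "8 * sqrt 2 * mu * a \<le> B"
  proof -
    have "32 * (1 + sqrt 2) * mu * a < b" using b .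
    then show ?thesis unfolding B_def by (simp add: algebra_simps)
  qed
  moreover have "8 * sqrt 2 * mu * a \<ge> 0" using mu a by simp
  ultimately have B0: "B \<ge> 8 * sqrt 2 * mu * a" "B \<ge> 0" by linarith+
  have sq: "(8 * sqrt 2 * mu * a)^2 = 128 * mu^2 * a^2"
    by (simp add: power_mult_distrib)
  have D: "D = B^2 - 128 * mu^2 * a^2" by (simp add: D_def Delta_par_def B_def)
  have D0: "D \<ge> 0"
  proof -
    have "(8 * sqrt 2 * mu * a)^2 \<le> B^2" using B0 mu a by (intro power_mono) auto
    then show ?thesis unfolding D using sq by linarith
  qed
  define s where "s = sqrt D"
  have s0: "s \<ge> 0" and ss: "s^2 = D" using D0 by (auto simp: s_def)
  have sB: "s \<le> B"
  proof -
    have "s^2 \<le> B^2" using ss D by simp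
    then show ?thesis using B0 s0 by (meson power2_le_imp_le)
  qed
  have om0: "om0 = (B - s)/16 + h" by (simp add: om0_def omega_min_def B_def s_def D_def)
  have om0p: "om0 > 0"
  proof -
    have "(B - s)/16 \<ge> 0" using sB by simp
    then show ?thesis unfolding om0 using h(1) by linarith
  qed
  then show "om0 > 0" .
  define R where "R = om0^2 + b * om0 / 16 - b * e / 4"
  have om1: "om1 = min ((B + s)/16 - h) (sqrt R)"
    by (simp add: om1_def omega_max_def B_def s_def D_def R_def om0_def)
  have hs: "h < s/32" using h by (simp add: s_def D_def)
  show "th - w/2 + 4 * (mu*a + w)^2 / b \<le> - 8 * h^2 / b" if w: "om0 < w" "w < om1" for w
  proof -
    have w1: "w - (B - s)/16 > h" using w om0 by simp
    have w2: "(B + s)/16 - w > h" using w om1 by simp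
    have "h * h \<le> (w - (B - s)/16) * ((B + s)/16 - w)"
      using w1 w2 h(1) by (intro mult_mono) linarith+
    then have p: "8 * w^2 - B * w + 4 * mu^2 * a^2 \<le> - 8 * h^2"
    proof -
      have "8 * w^2 - B * w + 4 * mu^2 * a^2 = - 8 * ((w - (B - s)/16) * ((B + s)/16 - w))"
        using ss D by (simp add: power2_eq_square field_simps)
      then show ?thesis using \<open>h * h \<le> _\<close> by (simp add: power2_eq_square)
    qed
    have wp: "w > 0" using w om0p by simp
    have "th \<le> 4 * w^2 / b + w / 4"
    proof -
      have "om0^2 \<le> w^2" using w om0p by (intro power_mono) auto
      then have "4 * om0^2 / b \<le> 4 * w^2 / b" using bp by (simp add: divide_right_mono)
      then show ?thesis using w unfolding th_def by simp
    qed
    moreover have "4 * w^2 / b + w/4 - w/2 + 4 * (mu*a + w)^2 / b = (8 * w^2 - B * w + 4 * mu^2 * a^2) / b"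
      using bp by (simp add: B_def power2_eq_square field_simps)
    moreover have "(8 * w^2 - B * w + 4 * mu^2 * a^2) / b \<le> - 8 * h^2 / b"
      using divide_right_mono[OF p, of b] bp by simp
    ultimately show ?thesis by linarith
  qed
  show "4 * w^2 / b - th \<le> - e" if w: "0 \<le> w" "w < om1" for w
  proof -
    have "b * e \<le> b * (om0/4)" using e bp by (intro mult_left_mono) auto
    then have "b * e / 4 \<le> b * om0 / 16" by simp
    moreover have "om0^2 \<ge> 0" by simp
    ultimately have R0: "R \<ge> 0" unfolding R_def by linarith
    have "w < sqrt R" using w om1 by simp
    then have "w^2 < (sqrt R)^2" using w R0 by (intro power_strict_mono) auto
    then have "w^2 < R" using R0 by simp
    then have "4 * w^2 / b \<le> 4 * R / b" using bp by (simp add: divide_right_mono)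
    moreover have "4 * R / b = 4 * om0^2 / b + om0 / 4 - e" using bp by (simp add: R_def field_simps)
    ultimately show ?thesis unfolding th_def by linarith
  qed
qed


lemma G_lip:
  fixes s s' s'' :: "real \<Rightarrow> real"
  assumes d1: "\<forall>x. (s has_real_derivative s' x) (at x)"
    and d2: "\<forall>x. (s' has_real_derivative s'' x) (at x)"
    and b0: "\<forall>x. \<bar>s x\<bar> \<le> p0" and b1: "\<forall>x. \<bar>s' x\<bar> \<le> p1" and b2: "\<forall>x. \<bar>s'' x\<bar> \<le> p2"
    and A: "\<bar>x\<bar> \<le> MA" and B: "\<bar>y\<bar> \<le> MB" and p2: "p2 \<ge> 0"
  shows "\<bar>s' u * (x + s u - y) - s' u' * (x' + s u' - y')\<bar>
     \<le> (p0 * p2 + p1^2 + MB * p2 + MA * p2) * \<bar>u - u'\<bar> + p1 * \<bar>x - x'\<bar> + p1 * \<bar>y - y'\<bar>"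
proof -
  have l1: "\<bar>s u - s u'\<bar> \<le> p1 * \<bar>u - u'\<bar>" by (rule lip_from_deriv[OF d1 b1])
  have l2: "\<bar>s' u - s' u'\<bar> \<le> p2 * \<bar>u - u'\<bar>" by (rule lip_from_deriv[OF d2 b2])
  have p1: "p1 \<ge> 0" using b1 by (meson abs_ge_zero order_trans)
  have e: "s' u * (x + s u - y) - s' u' * (x' + s u' - y')
     = (s' u - s' u') * (x + s u - y) + s' u' * ((x - x') + (s u - s u') - (y - y'))"
    by (simp add: algebra_simps)
  have t1: "\<bar>(s' u - s' u') * (x + s u - y)\<bar> \<le> (p2 * \<bar>u - u'\<bar>) * (MA + p0 + MB)"
  proof -
    have "\<bar>x + s u - y\<bar> \<le> MA + p0 + MB" using A B b0[rule_format, of u] by linarith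
    then show ?thesis unfolding abs_mult using l2 by (intro mult_mono) auto
  qed
  have t2: "\<bar>s' u' * ((x - x') + (s u - s u') - (y - y'))\<bar> \<le> p1 * (\<bar>x - x'\<bar> + p1 * \<bar>u - u'\<bar> + \<bar>y - y'\<bar>)"
  proof -
    have "\<bar>(x - x') + (s u - s u') - (y - y')\<bar> \<le> \<bar>x - x'\<bar> + p1 * \<bar>u - u'\<bar> + \<bar>y - y'\<bar>" using l1 by linarith
    then show ?thesis unfolding abs_mult using b1 p1 by (intro mult_mono) auto
  qed
  have "\<bar>s' u * (x + s u - y) - s' u' * (x' + s u' - y')\<bar> \<le> (p2 * \<bar>u - u'\<bar>) * (MA + p0 + MB) + p1 * (\<bar>x - x'\<bar> + p1 * \<bar>u - u'\<bar> + \<bar>y - y'\<bar>)"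
    unfolding e using t1 t2 abs_triangle_ineq[of "(s' u - s' u') * (x + s u - y)" "s' u' * ((x - x') + (s u - s u') - (y - y'))"] by linarith
  also have "\<dots> = (p0 * p2 + p1^2 + MB * p2 + MA * p2) * \<bar>u - u'\<bar> + p1 * \<bar>x - x'\<bar> + p1 * \<bar>y - y'\<bar>"
    by (simp add: algebra_simps power2_eq_square)
  finally show ?thesis .
qed



lemma tele_aux:
  fixes n t ob c :: "nat \<Rightarrow> real"
  assumes st: "\<And>i. 1 \<le> i \<Longrightarrow> i < M \<Longrightarrow> n i + t (i+1) + c i \<le> t i + ob (i+1)"
    and t1: "t 1 = ob 1" and M1: "1 \<le> m" and mM: "m \<le> M"
  shows "(\<Sum>i=1..m-1. n i + c i) + t m \<le> (\<Sum>i=1..m. ob i)"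
  using M1 mM
proof (induction m rule: dec_induct)
  case base then show ?case using t1 by simp
next
  case (step m)
  have "(\<Sum>i=1..Suc m - 1. n i + c i) = (\<Sum>i=1..m-1. n i + c i) + (n m + c m)"
    using step.hyps(1) by (cases m) (auto simp: add.commute)
  moreover have "n m + t (m+1) + c m \<le> t m + ob (m+1)" using st step by simp
  moreover have "(\<Sum>i=1..Suc m. ob i) = (\<Sum>i=1..m. ob i) + ob (m+1)" by simp
  ultimately show ?case using step.IH step.prems by simp
qed

lemma tele:
  fixes n t ob c :: "nat \<Rightarrow> real"
  assumes st: "\<And>i. 1 \<le> i \<Longrightarrow> i < M \<Longrightarrow> n i + t (i+1) + c i \<le> t i + ob (i+1)"
    and last: "n M + c M + e' \<le> t M + e"
    and t1: "t 1 = ob 1" and M1: "1 \<le> M"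
  shows "(\<Sum>i=1..M. n i) + (\<Sum>i=1..M. c i) + e' \<le> (\<Sum>i=1..M. ob i) + e"
proof -
  have a: "(\<Sum>i=1..M-1. n i + c i) + t M \<le> (\<Sum>i=1..M. ob i)"
    by (rule tele_aux[OF st t1 M1 order_refl])
  have "(\<Sum>i=1..M. n i) + (\<Sum>i=1..M. c i) = (\<Sum>i=1..M. n i + c i)" by (simp add: sum.distrib)
  also have "\<dots> = (\<Sum>i=1..M-1. n i + c i) + (n M + c M)"
    using M1 by (cases M) (auto simp: add.commute)
  finally show ?thesis using a last by linarith
qed

definition Rf :: "(nat \<Rightarrow> real \<Rightarrow> real) \<Rightarrow> nat \<Rightarrow> real^'n^'d \<Rightarrow> real^'n^'d \<Rightarrow> real^'n^'d \<Rightarrow> real" where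
  "Rf act i A Ui B = (norm (A + ent (act i) Ui - B))^2"

definition QQ :: "(nat \<Rightarrow> real) \<Rightarrow> nat \<Rightarrow> real^'d^'d \<Rightarrow> real^'n^'d \<Rightarrow> real^'n^'d \<Rightarrow> real^'n^'d \<Rightarrow> real" where
  "QQ beta i Wi A Ui Li = Qt (beta i) Li (Wi ** A - Ui)"

lemma L3s_alt:
  "L3s N Y lam mu beta act W WN U V VN Lam LamN =
     1/2 * (norm (VN - Y))^2 + lam/2 * (norm WN)^2
   + (\<Sum>i=1..N-1. lam/2 * (norm (W i))^2 + mu/2 * Rf act i (V (i-1)) (U i) (V i) + QQ beta i (W i) (V (i-1)) (U i) (Lam i))
   + Qt (beta N) LamN (WN ** V (N-1) - VN)"
proof -
  have e: "lam/2 * ((\<Sum>i=1..N-1. (norm (W i))^2) + (norm WN)^2) = (\<Sum>i=1..N-1. lam/2 * (norm (W i))^2) + lam/2 * (norm WN)^2"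
    by (simp add: distrib_left sum_distrib_left)
  have e2: "mu/2 * (\<Sum>i=1..N-1. (norm (V (i-1) + ent (act i) (U i) - V i))^2) = (\<Sum>i=1..N-1. mu/2 * (norm (V (i-1) + ent (act i) (U i) - V i))^2)"
    by (simp add: sum_distrib_left)
  show ?thesis
    unfolding L3s_def Rf_def QQ_def Qt_def sum.distrib e e2 by linarith
qed



lemma shift_sum0:
  fixes x w :: "nat \<Rightarrow> real"
  assumes "x 0 = 0"
  shows "(\<Sum>i=1..M. w i * x (i-1)) = (\<Sum>i=1..M-1. w (i+1) * x i)"
proof (induction M)
  case 0 then show ?case by simp
next
  case (Suc M)
  show ?case
  proof (cases M)
    case 0 then show ?thesis using assms by simp
  next
    case (Suc M')
    have "(\<Sum>i=1..Suc M. w i * x (i-1)) = (\<Sum>i=1..M. w i * x (i-1)) + w (Suc M) * x M" by simp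
    also have "\<dots> = (\<Sum>i=1..M-1. w (i+1) * x i) + w (M+1) * x M" using Suc.IH by simp
    also have "\<dots> = (\<Sum>i=1..Suc M - 1. w (i+1) * x i)" using Suc by simp
    finally show ?thesis .
  qed
qed

lemma sum_last_if:
  fixes f :: "nat \<Rightarrow> real"
  assumes "M \<ge> 1"
  shows "(\<Sum>i=1..M-1. f i) = (\<Sum>i=1..M. (if i < M then f i else 0))"
proof -
  have "(\<Sum>i=1..M. (if i < M then f i else 0)) = (\<Sum>i=1..M-1. (if i < M then f i else 0)) + (if M < M then f M else 0)"
    using assms by (cases M) auto
  also have "\<dots> = (\<Sum>i=1..M-1. f i)"
  proof -
    have "(\<Sum>i=1..M-1. (if i < M then f i else 0)) = (\<Sum>i=1..M-1. f i)"
      by (rule sum.cong) (use assms in auto)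
    then show ?thesis by simp
  qed
  finally show ?thesis by simp
qed

lemma shift_sum:
  fixes x w :: "nat \<Rightarrow> real"
  assumes "x 0 = 0" "M \<ge> 1"
  shows "(\<Sum>i=1..M. w i * x (i-1)) = (\<Sum>i=1..M. (if i < M then w (i+1) * x i else 0))"
  using shift_sum0[of x w M, OF assms(1)] sum_last_if[OF assms(2), of "\<lambda>i. w (i+1) * x i"] by simp

lemma aff_gen: "(1-t) *\<^sub>R a + t *\<^sub>R b - (U::'a::real_vector) + c = (1-t) *\<^sub>R (a - U + c) + t *\<^sub>R (b - U + c)"
proof -
  have "(1-t) *\<^sub>R (a - U + c) + t *\<^sub>R (b - U + c) = ((1-t) *\<^sub>R a + t *\<^sub>R b) - ((1-t) *\<^sub>R U + t *\<^sub>R U) + ((1-t) *\<^sub>R c + t *\<^sub>R c)"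
    by (simp only: scaleR_add_right scaleR_diff_right) (simp add: algebra_simps)
  also have "(1-t) *\<^sub>R U + t *\<^sub>R U = U" by (simp add: scaleR_add_left[symmetric])
  also have "(1-t) *\<^sub>R c + t *\<^sub>R c = c" by (simp add: scaleR_add_left[symmetric])
  finally show ?thesis by simp
qed

lemma aff_a: "((1-t) *\<^sub>R x + t *\<^sub>R y) ** (V::real^'n^'d) - (U::real^'n^'m) + c = (1-t) *\<^sub>R (x ** V - U + c) + t *\<^sub>R (y ** V - U + c)"
  by (simp only: mm_add_r mm_scale_r aff_gen)
lemma aff_b: "(W::real^'d^'m) ** ((1-t) *\<^sub>R x + t *\<^sub>R y) - (U::real^'n^'m) + c = (1-t) *\<^sub>R (W ** x - U + c) + t *\<^sub>R (W ** y - U + c)"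
  by (simp only: matrix_add_ldistrib mm_scale_l aff_gen)
lemma aff_c: "(A::'a::real_vector) - ((1-t) *\<^sub>R x + t *\<^sub>R y) = (1-t) *\<^sub>R (A - x) + t *\<^sub>R (A - y)"
  by (simp add: algebra_simps)
lemma aff_d: "((1-t) *\<^sub>R x + t *\<^sub>R y) + (B::'a::real_vector) - C = (1-t) *\<^sub>R (x + B - C) + t *\<^sub>R (y + B - C)"
  by (simp add: algebra_simps)
lemma aff_e: "((1-t) *\<^sub>R x + t *\<^sub>R y) - (A::'a::real_vector) - E = (1-t) *\<^sub>R (x - A - E) + t *\<^sub>R (y - A - E)"
  by (simp add: algebra_simps)

lemma norm_swap3: "norm ((A::'a::real_normed_vector) + E - Z) = norm (Z - A - E)"
proof -
  have "A + E - Z = - (Z - A - E)" by simp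
  then show ?thesis by (metis norm_minus_cancel)
qed

lemma sq4: fixes p q r s x :: real shows "0 \<le> p \<Longrightarrow> 0 \<le> q \<Longrightarrow> 0 \<le> r \<Longrightarrow> 0 \<le> s \<Longrightarrow> x \<le> p + q + r + s \<Longrightarrow> 0 \<le> x \<Longrightarrow>
   x^2 \<le> 4 * (p^2 + q^2 + r^2 + s^2)"
proof -
  assume h: "0 \<le> p" "0 \<le> q" "0 \<le> r" "0 \<le> s" "x \<le> p + q + r + s" "0 \<le> x"
  have "x^2 \<le> (p+q+r+s)^2" using power_mono[of x "p+q+r+s" 2] h by linarith
  also have "\<dots> \<le> 4 * (p^2 + q^2 + r^2 + s^2)"
  proof -
    have "4 * (p^2 + q^2 + r^2 + s^2) - (p+q+r+s)^2 = (p-q)^2+(p-r)^2+(p-s)^2+(q-r)^2+(q-s)^2+(r-s)^2"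
      by algebra
    moreover have "(p-q)^2+(p-r)^2+(p-s)^2+(q-r)^2+(q-s)^2+(r-s)^2 \<ge> 0" by simp
    ultimately show ?thesis by linarith
  qed
  finally show ?thesis .
qed



theorem mainTheorem10:
  fixes N :: nat
    and X :: "real^'n^'d" and Y :: "real^'n^'q"
    and lam mu psi0 psi1 psi2 :: real
    and beta :: "nat \<Rightarrow> real"
    and act :: "nat \<Rightarrow> real \<Rightarrow> real"
    and Vmax heps eps :: "nat \<Rightarrow> real"
    and omega :: "nat \<Rightarrow> nat \<Rightarrow> real"
    and W :: "nat \<Rightarrow> nat \<Rightarrow> real^'d^'d" and WN :: "nat \<Rightarrow> real^'d^'q"
    and U V Lam :: "nat \<Rightarrow> nat \<Rightarrow> real^'n^'d"
    and VN LamN :: "nat \<Rightarrow> real^'n^'q"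
  defines "a \<equiv> \<lambda>i. a_par psi0 psi1 psi2 Vmax i"
  defines "omin \<equiv> \<lambda>i. omega_min (beta i) mu (a i) (heps i)"
  defines "omax \<equiv> \<lambda>i. omega_max (beta i) mu (a i) (heps i) (eps i)"
  defines "theta \<equiv> \<lambda>i. 4 * (omin i)^2 / beta i + omin i / 4"
  defines "eta \<equiv> \<lambda>i. 4 * mu^2 * psi1^2 / beta i + mu / 4"
  assumes N3: "N \<ge> 3"
    and lam_pos: "lam > 0" and mu_pos: "mu > 0"
    and beta_pos: "\<forall>i\<in>{1..N}. beta i > 0"
    and psi_pos: "psi0 > 0" "psi1 > 0" "psi2 > 0"
    and sigma_an: "\<forall>i\<in>{1..N-1}. real_analytic (act i)"
    and sigma_bd0: "\<forall>i\<in>{1..N-1}. \<forall>x. \<bar>act i x\<bar> \<le> psi0"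
    and sigma_bd1: "\<forall>i\<in>{1..N-1}. \<forall>x. \<bar>deriv (act i) x\<bar> \<le> psi1"
    and sigma_bd2: "\<forall>i\<in>{1..N-1}. \<forall>x. \<bar>deriv (deriv (act i)) x\<bar> \<le> psi2"
    \<comment> \<open>V_0 := X\<close>
    and V0: "\<forall>k. V k 0 = X"
    \<comment> \<open>initialization\<close>
    and initU: "\<forall>i\<in>{1..N-1}. U 0 i = W 0 i ** V 0 (i-1)"
    and initV: "\<forall>i\<in>{1..N-1}. V 0 i = V 0 (i-1) + ent (act i) (U 0 i)"
    and initVN: "VN 0 = WN 0 ** V 0 (N-1)"
    and initLam: "\<forall>i\<in>{1..N-1}. Lam 0 i = 0" and initLamN: "LamN 0 = 0"
    \<comment> \<open>(a) W-updates\<close>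
    and updW: "\<forall>k\<ge>1. \<forall>i\<in>{1..N-1}. \<forall>Z.
        lam/2 * (norm (W k i))^2
          + beta i/2 * (norm (W k i ** V (k-1) (i-1) - U (k-1) i + (1/beta i) *\<^sub>R Lam (k-1) i))^2
        \<le> lam/2 * (norm Z)^2
          + beta i/2 * (norm (Z ** V (k-1) (i-1) - U (k-1) i + (1/beta i) *\<^sub>R Lam (k-1) i))^2"
    and updWN: "\<forall>k\<ge>1. \<forall>Z.
        lam/2 * (norm (WN k))^2
          + beta N/2 * (norm (WN k ** V (k-1) (N-1) - VN (k-1) + (1/beta N) *\<^sub>R LamN (k-1)))^2
        \<le> lam/2 * (norm Z)^2
          + beta N/2 * (norm (Z ** V (k-1) (N-1) - VN (k-1) + (1/beta N) *\<^sub>R LamN (k-1)))^2"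
    \<comment> \<open>(b) U-updates (a fixed minimizer)\<close>
    and updU: "\<forall>k\<ge>1. \<forall>i\<in>{1..N-1}. \<forall>Z.
        mu/2 * (norm (V k (i-1) + ent (act i) (U k i) - V (k-1) i))^2
          + beta i/2 * (norm (U k i - W k i ** V k (i-1) - (1/beta i) *\<^sub>R Lam (k-1) i))^2
          + omega (k-1) i/2 * (norm (U k i - U (k-1) i))^2
        \<le> mu/2 * (norm (V k (i-1) + ent (act i) Z - V (k-1) i))^2
          + beta i/2 * (norm (Z - W k i ** V k (i-1) - (1/beta i) *\<^sub>R Lam (k-1) i))^2
          + omega (k-1) i/2 * (norm (Z - U (k-1) i))^2"
    \<comment> \<open>(b) V-updates, i \<le> N-2\<close>
    and updV: "\<forall>k\<ge>1. \<forall>i\<in>{1..N-2}. \<forall>Z.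
        mu/2 * (norm (V k (i-1) + ent (act i) (U k i) - V k i))^2
          + mu/2 * (norm (V k i + ent (act (i+1)) (U (k-1) (i+1)) - V (k-1) (i+1)))^2
          + beta (i+1)/2 * (norm (W k (i+1) ** V k i - U (k-1) (i+1)
                                  + (1/beta (i+1)) *\<^sub>R Lam (k-1) (i+1)))^2
        \<le> mu/2 * (norm (V k (i-1) + ent (act i) (U k i) - Z))^2
          + mu/2 * (norm (Z + ent (act (i+1)) (U (k-1) (i+1)) - V (k-1) (i+1)))^2
          + beta (i+1)/2 * (norm (W k (i+1) ** Z - U (k-1) (i+1)
                                  + (1/beta (i+1)) *\<^sub>R Lam (k-1) (i+1)))^2"
    \<comment> \<open>(b) V-update, i = N-1\<close>
    and updVlast: "\<forall>k\<ge>1. \<forall>Z.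
        mu/2 * (norm (V k (N-1) - V k (N-2) - ent (act (N-1)) (U k (N-1))))^2
          + beta N/2 * (norm (WN k ** V k (N-1) - VN (k-1) + (1/beta N) *\<^sub>R LamN (k-1)))^2
        \<le> mu/2 * (norm (Z - V k (N-2) - ent (act (N-1)) (U k (N-1))))^2
          + beta N/2 * (norm (WN k ** Z - VN (k-1) + (1/beta N) *\<^sub>R LamN (k-1)))^2"
    \<comment> \<open>(c)\<close>
    and updVN: "\<forall>k\<ge>1. VN k = (1/(1 + beta N)) *\<^sub>R (Y + beta N *\<^sub>R (WN k ** V k (N-1)) + LamN (k-1))"
    \<comment> \<open>(d)\<close>
    and updLam: "\<forall>k\<ge>1. \<forall>i\<in>{1..N-1}. Lam k i = Lam (k-1) i + beta i *\<^sub>R (W k i ** V k (i-1) - U k i)"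
    and updLamN: "\<forall>k\<ge>1. LamN k = LamN (k-1) + beta N *\<^sub>R (WN k ** V k (N-1) - VN k)"
    \<comment> \<open>bounds V^max\<close>
    and Vmax0: "Vmax 0 > norm X"
    and Vmax_pos: "\<forall>i\<in>{1..N-1}. Vmax i > 0"
    \<comment> \<open>(A1)\<close>
    and A1: "\<forall>i\<in>{1..N-1}. beta i > max (32 * (1 + sqrt 2) * mu * a i) (16 * mu * psi1^2)"
    and A1N: "beta N > 1"
    \<comment> \<open>(A2)\<close>
    and heps_rng: "\<forall>i\<in>{1..N-1}. 0 < heps i \<and> heps i < sqrt (Delta_par (beta i) mu (a i)) / 32"
    and eps_rng: "\<forall>i\<in>{1..N-1}. 0 < eps i \<and> eps i < omin i / 4"
    and A2: "\<forall>k. \<forall>i\<in>{1..N-1}. omin i < omega k i \<and> omega k i \<le> omega (Suc k) i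
                                 \<and> omega (Suc k) i < omax i"
    \<comment> \<open>(A3)\<close>
    and A3: "\<forall>k. \<forall>i\<in>{1..N-1}. norm (V k i) \<le> Vmax i"
  shows "\<exists>C>0. \<forall>k\<ge>2.
     Lext N Y lam mu beta act theta eta (W k) (WN k) (U k) (V k) (VN k) (Lam k) (LamN k)
          (U (k-1)) (V (k-1))
     \<le> Lext N Y lam mu beta act theta eta (W (k-1)) (WN (k-1)) (U (k-1)) (V (k-1)) (VN (k-1))
          (Lam (k-1)) (LamN (k-1)) (U (k-2)) (V (k-2))
       - C * ((\<Sum>i=1..N-1. (norm (W k i - W (k-1) i))^2) + (norm (WN k - WN (k-1)))^2
            + (\<Sum>i=1..N-1. (norm (U k i - U (k-1) i))^2)
            + (\<Sum>i=1..N-1. (norm (V k i - V (k-1) i))^2) + (norm (VN k - VN (k-1)))^2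
            + (\<Sum>i=1..N-1. (norm (Lam k i - Lam (k-1) i))^2) + (norm (LamN k - LamN (k-1)))^2
            + (\<Sum>i=1..N-1. (norm (U (k-1) i - U (k-2) i))^2)
            + (\<Sum>i=1..N-1. (norm (V (k-1) i - V (k-2) i))^2))"
  proof -
  have N1: "N - 1 \<ge> 1" "N - 1 - 1 = N - 2" "N - 2 \<ge> 1" using N3 by auto
  have bp: "\<And>i. i \<in> {1..N-1} \<Longrightarrow> beta i > 0" using beta_pos by auto
  have bN: "beta N > 0" using A1N by simp
  have dA1: "\<And>i. i \<in> {1..N-1} \<Longrightarrow> \<forall>x. (act i has_real_derivative deriv (act i) x) (at x)"
    using analytic_diff(1) sigma_an by blast
  have dA2: "\<And>i. i \<in> {1..N-1} \<Longrightarrow> \<forall>x. (deriv (act i) has_real_derivative deriv (deriv (act i)) x) (at x)"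
    using analytic_diff(2) sigma_an by blast
  have Vm: "\<And>i k a b. i \<in> {1..N-1} \<Longrightarrow> \<bar>V k i $ a $ b\<bar> \<le> Vmax i"
    using A3 entry_le_norm order_trans by metis
  have Vm1: "\<bar>V k (i-1) $ a $ b\<bar> \<le> Vmax (i-1)" if i: "i \<in> {1..N-1}" for i k a b
  proof (cases "i = 1")
    case True
    then show ?thesis using V0 entry_le_norm[of X a b] Vmax0 by simp
  next
    case False
    then have "i - 1 \<in> {1..N-1}" using i by auto
    then show ?thesis using Vm by blast
  qed
  have Vmn: "Vmax (i-1) \<ge> 0" if i: "i \<in> {1..N-1}" for i
    using Vm1[OF i, of 0] by (meson abs_ge_zero order_trans)
  have a0: "a i \<ge> 0" if i: "i \<in> {1..N-1}" for i
  proof -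
    have "Vmax i > 0" using Vmax_pos i by blast
    then show ?thesis
      unfolding a_def a_par_def using psi_pos Vmn[OF i]
      by (intro add_nonneg_nonneg mult_nonneg_nonneg) auto
  qed
  have PF: "omin i > 0 \<and> (\<forall>w. omin i < w \<longrightarrow> w < omax i \<longrightarrow> theta i - w/2 + 4 * (mu * a i + w)^2 / beta i \<le> - 8 * (heps i)^2 / beta i)
        \<and> (\<forall>w. 0 \<le> w \<longrightarrow> w < omax i \<longrightarrow> 4 * w^2 / beta i - theta i \<le> - eps i)" if i: "i \<in> {1..N-1}" for i
  proof -
    have b: "beta i > 32 * (1 + sqrt 2) * mu * a i" using A1 i by auto
    have h: "0 < heps i" "heps i < sqrt (Delta_par (beta i) mu (a i)) / 32" using heps_rng i by auto
    have e: "0 < eps i" "eps i < omin i / 4" using eps_rng i by auto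
    note pf = param_facts[OF mu_pos a0[OF i] b bp[OF i] h e, of "omax i" "theta i"]
    have eqs: "omin i = omega_min (beta i) mu (a i) (heps i)" "omax i = omega_max (beta i) mu (a i) (heps i) (eps i)"
      "theta i = 4 * (omin i)^2 / beta i + omin i / 4"
      by (simp_all add: omin_def omax_def theta_def)
    show ?thesis using pf(1)[OF eqs] pf(2)[OF eqs] pf(3)[OF eqs] by blast
  qed
  have ob: "omin i < omega k i \<and> omega k i < omax i" if i: "i \<in> {1..N-1}" for i k
    using A2 i by (meson le_less_trans)
  have P4: "4 * mu^2 * psi1^2 / beta i < mu / 4" if i: "i \<in> {1..N-1}" for i
  proof -
    have "beta i > 16 * mu * psi1^2" using A1 i by auto
    then have "mu/4 * (16 * mu * psi1^2) < mu/4 * beta i" using mu_pos by simp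
    then have "4 * mu^2 * psi1^2 < mu/4 * beta i" by (simp add: power2_eq_square)
    then show ?thesis using bp[OF i] by (simp add: field_simps)
  qed
  define fI where "fI = (\<lambda>i. min (8 * (heps i)^2 / beta i) (min (eps i) (mu/4 - 4 * mu^2 * psi1^2 / beta i)))"
  have fI0: "fI i > 0" if i: "i \<in> {1..N-1}" for i
  proof -
    have "heps i > 0" "eps i > 0" using heps_rng eps_rng i by auto
    then show ?thesis using P4[OF i] bp[OF i] unfolding fI_def by auto
  qed
  define c0 where "c0 = min (Min (fI ` {1..N-1})) (min (lam/2) ((1 + beta N)/2 - 1 / beta N))"
  have fin: "finite (fI ` {1..N-1})" "fI ` {1..N-1} \<noteq> {}" using N1 by auto
  have bNc: "(1 + beta N)/2 - 1 / beta N > 0"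
  proof -
    have "1 / beta N < 1" using A1N by simp
    also have "1 < (1 + beta N)/2" using A1N by simp
    finally show ?thesis by simp
  qed
  have c0p: "c0 > 0"
  proof -
    have "Min (fI ` {1..N-1}) > 0" using fin fI0 by (subst Min_gr_iff) auto
    then show ?thesis unfolding c0_def using lam_pos bNc by simp
  qed
  have c0f: "c0 \<le> fI i" if i: "i \<in> {1..N-1}" for i
  proof -
    have "Min (fI ` {1..N-1}) \<le> fI i" using fin i by (intro Min_le) auto
    then show ?thesis unfolding c0_def by linarith
  qed
  have c0l: "c0 \<le> lam/2" "c0 \<le> (1 + beta N)/2 - 1 / beta N" unfolding c0_def
    by (meson min.cobounded2 min.cobounded1 order_trans)+
  define Kc where "Kc = (\<lambda>i. 4 * ((mu * a i + omax i)^2 + mu^2 * psi1^2 + (omax i)^2))"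
  define Kall where "Kall = (\<Sum>i=1..N-1. Kc i)"
  have Kc0: "Kc i \<ge> 0" for i unfolding Kc_def by simp
  have KcK: "Kc i \<le> Kall" if i: "i \<in> {1..N-1}" for i
    unfolding Kall_def using i Kc0 by (intro member_le_sum) auto
  have Kall0: "Kall \<ge> 0" unfolding Kall_def using Kc0 by (simp add: sum_nonneg)
  define C where "C = c0 / (Kall + 2)"
  have Cp: "C > 0" unfolding C_def using c0p Kall0 by simp
  have main: "Lext N Y lam mu beta act theta eta (W k) (WN k) (U k) (V k) (VN k) (Lam k) (LamN k)
          (U (k-1)) (V (k-1))
     \<le> Lext N Y lam mu beta act theta eta (W (k-1)) (WN (k-1)) (U (k-1)) (V (k-1)) (VN (k-1))
          (Lam (k-1)) (LamN (k-1)) (U (k-2)) (V (k-2))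
       - C * ((\<Sum>i=1..N-1. (norm (W k i - W (k-1) i))^2) + (norm (WN k - WN (k-1)))^2
            + (\<Sum>i=1..N-1. (norm (U k i - U (k-1) i))^2)
            + (\<Sum>i=1..N-1. (norm (V k i - V (k-1) i))^2) + (norm (VN k - VN (k-1)))^2
            + (\<Sum>i=1..N-1. (norm (Lam k i - Lam (k-1) i))^2) + (norm (LamN k - LamN (k-1)))^2
            + (\<Sum>i=1..N-1. (norm (U (k-1) i - U (k-2) i))^2)
            + (\<Sum>i=1..N-1. (norm (V (k-1) i - V (k-2) i))^2))" if k: "k \<ge> 2" for k
  proof -
    have k1: "k - 1 \<ge> 1" "k \<ge> 1" "k - 1 - 1 = k - 2" using k by auto
    define dU where "dU = (\<lambda>i. (norm (U k i - U (k-1) i))^2)"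
    define dUo where "dUo = (\<lambda>i. (norm (U (k-1) i - U (k-2) i))^2)"
    define dV where "dV = (\<lambda>i. (norm (V k i - V (k-1) i))^2)"
    define dVo where "dVo = (\<lambda>i. (norm (V (k-1) i - V (k-2) i))^2)"
    define dW where "dW = (\<lambda>i. (norm (W k i - W (k-1) i))^2)"
    define dL where "dL = (\<lambda>i. (norm (Lam k i - Lam (k-1) i))^2)"
    define dWN where "dWN = (norm (WN k - WN (k-1)))^2"
    define dVN where "dVN = (norm (VN k - VN (k-1)))^2"
    define dLN where "dLN = (norm (LamN k - LamN (k-1)))^2"
    have FW: "lam/2 * (norm (W k i))^2 + QQ beta i (W k i) (V (k-1) (i-1)) (U (k-1) i) (Lam (k-1) i) + lam/2 * dW i
      \<le> lam/2 * (norm (W (k-1) i))^2 + QQ beta i (W (k-1) i) (V (k-1) (i-1)) (U (k-1) i) (Lam (k-1) i)"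
      if i: "i \<in> {1..N-1}" for i
    proof -
      define f where "f = (\<lambda>Z::real^'d^'d. lam/2 * (norm Z)^2
          + beta i/2 * (norm (Z ** V (k-1) (i-1) - U (k-1) i + (1/beta i) *\<^sub>R Lam (k-1) i))^2)"
      have mn: "\<forall>Z. f (W k i) \<le> f Z" using updW k1 i unfolding f_def by (simp add: k1(1))
      have sc: "sconv (lam * 1 + beta i * 0) f" unfolding f_def
        by (rule sconv_add[OF sconv_sq[of "\<lambda>z. z"] sconv_sq[of "\<lambda>Z. Z ** V (k-1) (i-1) - U (k-1) i + (1/beta i) *\<^sub>R Lam (k-1) i"]])
          (use lam_pos bp[OF i] aff_a in auto)
      have "f (W (k-1) i) - f (W k i) \<ge> (lam * 1 + beta i * 0)/2 * (norm (W (k-1) i - W k i))^2"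
        by (rule sconv_min[OF sc _ mn]) (use lam_pos in simp)
      then show ?thesis unfolding QQ_def f_def dW_def Qt_alt[OF bp[OF i]]
        by (simp add: norm_minus_commute)
    qed
    have FU: "mu/2 * Rf act i (V k (i-1)) (U k i) (V (k-1) i) + QQ beta i (W k i) (V k (i-1)) (U k i) (Lam (k-1) i)
        + omega (k-1) i/2 * dU i
      \<le> mu/2 * Rf act i (V k (i-1)) (U (k-1) i) (V (k-1) i) + QQ beta i (W k i) (V k (i-1)) (U (k-1) i) (Lam (k-1) i)"
      if i: "i \<in> {1..N-1}" for i
    proof -
      have "mu/2 * (norm (V k (i-1) + ent (act i) (U k i) - V (k-1) i))^2
          + beta i/2 * (norm (U k i - W k i ** V k (i-1) - (1/beta i) *\<^sub>R Lam (k-1) i))^2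
          + omega (k-1) i/2 * (norm (U k i - U (k-1) i))^2
        \<le> mu/2 * (norm (V k (i-1) + ent (act i) (U (k-1) i) - V (k-1) i))^2
          + beta i/2 * (norm (U (k-1) i - W k i ** V k (i-1) - (1/beta i) *\<^sub>R Lam (k-1) i))^2
          + omega (k-1) i/2 * (norm (U (k-1) i - U (k-1) i))^2"
        using updU k1 i by blast
      then show ?thesis unfolding QQ_def Rf_def dU_def Qt_alt2[OF bp[OF i]] by simp
    qed
    have FV: "mu/2 * Rf act i (V k (i-1)) (U k i) (V k i) + mu/2 * Rf act (i+1) (V k i) (U (k-1) (i+1)) (V (k-1) (i+1))
        + QQ beta (i+1) (W k (i+1)) (V k i) (U (k-1) (i+1)) (Lam (k-1) (i+1)) + mu * dV i
      \<le> mu/2 * Rf act i (V k (i-1)) (U k i) (V (k-1) i) + mu/2 * Rf act (i+1) (V (k-1) i) (U (k-1) (i+1)) (V (k-1) (i+1))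
        + QQ beta (i+1) (W k (i+1)) (V (k-1) i) (U (k-1) (i+1)) (Lam (k-1) (i+1))"
      if i: "i \<in> {1..N-2}" for i
    proof -
      have i1: "i+1 \<in> {1..N-1}" using i by auto
      define f where "f = (\<lambda>Z::real^'n^'d. mu/2 * (norm (V k (i-1) + ent (act i) (U k i) - Z))^2
          + mu/2 * (norm (Z + ent (act (i+1)) (U (k-1) (i+1)) - V (k-1) (i+1)))^2
          + beta (i+1)/2 * (norm (W k (i+1) ** Z - U (k-1) (i+1) + (1/beta (i+1)) *\<^sub>R Lam (k-1) (i+1)))^2)"
      have mn: "\<forall>Z. f (V k i) \<le> f Z" using updV k1 i unfolding f_def by blast
      have sc: "sconv (mu * 1 + mu * 1 + beta (i+1) * 0) f" unfolding f_def
        by (rule sconv_add[OF sconv_add[OF sconv_sq[of "\<lambda>Z. V k (i-1) + ent (act i) (U k i) - Z"]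
             sconv_sq[of "\<lambda>Z. Z + ent (act (i+1)) (U (k-1) (i+1)) - V (k-1) (i+1)"]]
             sconv_sq[of "\<lambda>Z. W k (i+1) ** Z - U (k-1) (i+1) + (1/beta (i+1)) *\<^sub>R Lam (k-1) (i+1)"]])
          (use mu_pos bp[OF i1] aff_b aff_c aff_d in \<open>auto simp: norm_minus_commute\<close>)
      have "f (V (k-1) i) - f (V k i) \<ge> (mu * 1 + mu * 1 + beta (i+1) * 0)/2 * (norm (V (k-1) i - V k i))^2"
        by (rule sconv_min[OF sc _ mn]) (use mu_pos in simp)
      then show ?thesis unfolding QQ_def f_def dV_def Rf_def Qt_alt[OF bp[OF i1]]
        by (simp add: norm_minus_commute)
    qed
    have FVL: "mu/2 * Rf act (N-1) (V k (N-2)) (U k (N-1)) (V k (N-1))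
        + Qt (beta N) (LamN (k-1)) (WN k ** V k (N-1) - VN (k-1)) + mu/2 * dV (N-1)
      \<le> mu/2 * Rf act (N-1) (V k (N-2)) (U k (N-1)) (V (k-1) (N-1))
        + Qt (beta N) (LamN (k-1)) (WN k ** V (k-1) (N-1) - VN (k-1))"
    proof -
      define f where "f = (\<lambda>Z::real^'n^'d. mu/2 * (norm (Z - V k (N-2) - ent (act (N-1)) (U k (N-1))))^2
          + beta N/2 * (norm (WN k ** Z - VN (k-1) + (1/beta N) *\<^sub>R LamN (k-1)))^2)"
      have mn: "\<forall>Z. f (V k (N-1)) \<le> f Z" using updVlast k1 unfolding f_def by blast
      have sc: "sconv (mu * 1 + beta N * 0) f" unfolding f_def
        by (rule sconv_add[OF sconv_sq[of "\<lambda>Z. Z - V k (N-2) - ent (act (N-1)) (U k (N-1))"]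
             sconv_sq[of "\<lambda>Z. WN k ** Z - VN (k-1) + (1/beta N) *\<^sub>R LamN (k-1)"]])
          (use mu_pos bN aff_b aff_e in \<open>auto simp: norm_minus_commute\<close>)
      have "f (V (k-1) (N-1)) - f (V k (N-1)) \<ge> (mu * 1 + beta N * 0)/2 * (norm (V (k-1) (N-1) - V k (N-1)))^2"
        by (rule sconv_min[OF sc _ mn]) (use mu_pos in simp)
      then show ?thesis unfolding f_def dV_def Rf_def Qt_alt[OF bN] norm_swap3
        by (simp add: norm_minus_commute)
    qed
    have FWN: "lam/2 * (norm (WN k))^2 + Qt (beta N) (LamN (k-1)) (WN k ** V (k-1) (N-1) - VN (k-1)) + lam/2 * dWN
      \<le> lam/2 * (norm (WN (k-1)))^2 + Qt (beta N) (LamN (k-1)) (WN (k-1) ** V (k-1) (N-1) - VN (k-1))"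
    proof -
      define f where "f = (\<lambda>Z::real^'d^'q. lam/2 * (norm Z)^2
          + beta N/2 * (norm (Z ** V (k-1) (N-1) - VN (k-1) + (1/beta N) *\<^sub>R LamN (k-1)))^2)"
      have mn: "\<forall>Z. f (WN k) \<le> f Z" using updWN k1 unfolding f_def by (simp add: k1(1))
      have sc: "sconv (lam * 1 + beta N * 0) f" unfolding f_def
        by (rule sconv_add[OF sconv_sq[of "\<lambda>z. z"] sconv_sq[of "\<lambda>Z. Z ** V (k-1) (N-1) - VN (k-1) + (1/beta N) *\<^sub>R LamN (k-1)"]])
          (use lam_pos bN aff_a in auto)
      have "f (WN (k-1)) - f (WN k) \<ge> (lam * 1 + beta N * 0)/2 * (norm (WN (k-1) - WN k))^2"
        by (rule sconv_min[OF sc _ mn]) (use lam_pos in simp)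
      then show ?thesis unfolding f_def dWN_def Qt_alt[OF bN]
        by (simp add: norm_minus_commute)
    qed
    have FVN: "1/2 * (norm (VN k - Y))^2 + Qt (beta N) (LamN (k-1)) (WN k ** V k (N-1) - VN k) + (1 + beta N)/2 * dVN
      \<le> 1/2 * (norm (VN (k-1) - Y))^2 + Qt (beta N) (LamN (k-1)) (WN k ** V k (N-1) - VN (k-1))"
    proof -
      have h: "(1 + beta N) *\<^sub>R VN k = Y + beta N *\<^sub>R (WN k ** V k (N-1)) + LamN (k-1)"
        using updVN k1 bN by simp
      show ?thesis using VN_exact[OF h, of "VN (k-1)"] unfolding dVN_def
        by (simp add: norm_minus_commute)
    qed
    have FL: "QQ beta i (W k i) (V k (i-1)) (U k i) (Lam k i)
        = QQ beta i (W k i) (V k (i-1)) (U k i) (Lam (k-1) i) + dL i / beta i" if i: "i \<in> {1..N-1}" for i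
      unfolding QQ_def dL_def
      by (rule Qt_dual[OF bp[OF i]]) (use updLam k1 i in blast)
    have FLN: "Qt (beta N) (LamN k) (WN k ** V k (N-1) - VN k)
        = Qt (beta N) (LamN (k-1)) (WN k ** V k (N-1) - VN k) + dLN / beta N"
      unfolding dLN_def
      by (rule Qt_dual[OF bN]) (use updLamN k1 in blast)
    define nn where "nn = (\<lambda>i. mu/2 * Rf act i (V k (i-1)) (U k i) (V k i) + QQ beta i (W k i) (V k (i-1)) (U k i) (Lam (k-1) i))"
    define tt where "tt = (\<lambda>i. mu/2 * Rf act i (V k (i-1)) (U (k-1) i) (V (k-1) i) + QQ beta i (W k i) (V k (i-1)) (U (k-1) i) (Lam (k-1) i))"
    define obb where "obb = (\<lambda>i. mu/2 * Rf act i (V (k-1) (i-1)) (U (k-1) i) (V (k-1) i) + QQ beta i (W k i) (V (k-1) (i-1)) (U (k-1) i) (Lam (k-1) i))"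
    define cc where "cc = (\<lambda>i. omega (k-1) i/2 * dU i + (if i = N-1 then mu/2 else mu) * dV i)"
    have TL: "(\<Sum>i=1..N-1. nn i) + (\<Sum>i=1..N-1. cc i) + Qt (beta N) (LamN (k-1)) (WN k ** V k (N-1) - VN (k-1))
       \<le> (\<Sum>i=1..N-1. obb i) + Qt (beta N) (LamN (k-1)) (WN k ** V (k-1) (N-1) - VN (k-1))"
    proof (rule tele[where M="N-1"])
      fix i assume i: "1 \<le> i" "i < N - 1"
      then have i1: "i \<in> {1..N-1}" and i2: "i \<in> {1..N-2}" by auto
      have e1: "tt (i+1) = mu/2 * Rf act (i+1) (V k i) (U (k-1) (i+1)) (V (k-1) (i+1)) + QQ beta (i+1) (W k (i+1)) (V k i) (U (k-1) (i+1)) (Lam (k-1) (i+1))"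
        by (simp add: tt_def)
      have e2: "obb (i+1) = mu/2 * Rf act (i+1) (V (k-1) i) (U (k-1) (i+1)) (V (k-1) (i+1)) + QQ beta (i+1) (W k (i+1)) (V (k-1) i) (U (k-1) (i+1)) (Lam (k-1) (i+1))"
        by (simp add: obb_def)
      have e3: "cc i = omega (k-1) i/2 * dU i + mu * dV i" using i by (simp add: cc_def)
      show "nn i + tt (i+1) + cc i \<le> tt i + obb (i+1)"
        using FU[OF i1] FV[OF i2] e1 e2 e3 unfolding nn_def tt_def by linarith
    next
      have e3: "cc (N-1) = omega (k-1) (N-1)/2 * dU (N-1) + mu/2 * dV (N-1)" by (simp add: cc_def)
      have iN: "N - 1 \<in> {1..N-1}" using N1 by auto
      show "nn (N-1) + cc (N-1) + Qt (beta N) (LamN (k-1)) (WN k ** V k (N-1) - VN (k-1))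
         \<le> tt (N-1) + Qt (beta N) (LamN (k-1)) (WN k ** V (k-1) (N-1) - VN (k-1))"
        using FU[OF iN] FVL e3 unfolding nn_def tt_def N1(2) by linarith
    next
      show "tt 1 = obb 1" unfolding tt_def obb_def using V0 by simp
    next
      show "1 \<le> N - 1" using N1 by simp
    qed
    have Lnew: "L3s N Y lam mu beta act (W k) (WN k) (U k) (V k) (VN k) (Lam k) (LamN k)
       = 1/2 * (norm (VN k - Y))^2 + lam/2 * (norm (WN k))^2
       + (\<Sum>i=1..N-1. lam/2 * (norm (W k i))^2 + mu/2 * Rf act i (V k (i-1)) (U k i) (V k i) + QQ beta i (W k i) (V k (i-1)) (U k i) (Lam k i))
       + Qt (beta N) (LamN k) (WN k ** V k (N-1) - VN k)" by (rule L3s_alt)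
    have Lold: "L3s N Y lam mu beta act (W (k-1)) (WN (k-1)) (U (k-1)) (V (k-1)) (VN (k-1)) (Lam (k-1)) (LamN (k-1))
       = 1/2 * (norm (VN (k-1) - Y))^2 + lam/2 * (norm (WN (k-1)))^2
       + (\<Sum>i=1..N-1. lam/2 * (norm (W (k-1) i))^2 + mu/2 * Rf act i (V (k-1) (i-1)) (U (k-1) i) (V (k-1) i) + QQ beta i (W (k-1) i) (V (k-1) (i-1)) (U (k-1) i) (Lam (k-1) i))
       + Qt (beta N) (LamN (k-1)) (WN (k-1) ** V (k-1) (N-1) - VN (k-1))" by (rule L3s_alt)
    have S1: "(\<Sum>i=1..N-1. lam/2 * (norm (W k i))^2 + mu/2 * Rf act i (V k (i-1)) (U k i) (V k i) + QQ beta i (W k i) (V k (i-1)) (U k i) (Lam k i))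
       = (\<Sum>i=1..N-1. lam/2 * (norm (W k i))^2) + (\<Sum>i=1..N-1. nn i) + (\<Sum>i=1..N-1. dL i / beta i)"
    proof -
      have "(\<Sum>i=1..N-1. lam/2 * (norm (W k i))^2 + mu/2 * Rf act i (V k (i-1)) (U k i) (V k i) + QQ beta i (W k i) (V k (i-1)) (U k i) (Lam k i))
        = (\<Sum>i=1..N-1. lam/2 * (norm (W k i))^2 + nn i + dL i / beta i)"
        by (rule sum.cong) (use FL in \<open>auto simp: nn_def\<close>)
      then show ?thesis by (simp add: sum.distrib)
    qed
    have S2: "(\<Sum>i=1..N-1. lam/2 * (norm (W k i))^2) + (\<Sum>i=1..N-1. obb i) + (\<Sum>i=1..N-1. lam/2 * dW i)
       \<le> (\<Sum>i=1..N-1. lam/2 * (norm (W (k-1) i))^2 + mu/2 * Rf act i (V (k-1) (i-1)) (U (k-1) i) (V (k-1) i) + QQ beta i (W (k-1) i) (V (k-1) (i-1)) (U (k-1) i) (Lam (k-1) i))"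
    proof -
      have "(\<Sum>i=1..N-1. lam/2 * (norm (W k i))^2 + obb i + lam/2 * dW i)
        \<le> (\<Sum>i=1..N-1. lam/2 * (norm (W (k-1) i))^2 + mu/2 * Rf act i (V (k-1) (i-1)) (U (k-1) i) (V (k-1) i) + QQ beta i (W (k-1) i) (V (k-1) (i-1)) (U (k-1) i) (Lam (k-1) i))"
      proof (rule sum_mono)
        fix i assume i: "i \<in> {1..N-1}"
        show "lam/2 * (norm (W k i))^2 + obb i + lam/2 * dW i
          \<le> lam/2 * (norm (W (k-1) i))^2 + mu/2 * Rf act i (V (k-1) (i-1)) (U (k-1) i) (V (k-1) i) + QQ beta i (W (k-1) i) (V (k-1) (i-1)) (U (k-1) i) (Lam (k-1) i)"
          using FW[OF i] unfolding obb_def by linarith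
      qed
      then show ?thesis by (simp add: sum.distrib)
    qed
    have D: "L3s N Y lam mu beta act (W k) (WN k) (U k) (V k) (VN k) (Lam k) (LamN k)
       \<le> L3s N Y lam mu beta act (W (k-1)) (WN (k-1)) (U (k-1)) (V (k-1)) (VN (k-1)) (Lam (k-1)) (LamN (k-1))
         - (\<Sum>i=1..N-1. cc i) - (\<Sum>i=1..N-1. lam/2 * dW i) - lam/2 * dWN - (1 + beta N)/2 * dVN
         + (\<Sum>i=1..N-1. dL i / beta i) + dLN / beta N"
      using Lnew Lold S1 S2 TL FWN FVN FLN by linarith
    have lamform: "Lam k' i $ a' $ b' = mu * (deriv (act i) (U k' i $ a' $ b') * (V k' (i-1) $ a' $ b' + act i (U k' i $ a' $ b') - V (k'-1) i $ a' $ b'))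
        + omega (k'-1) i * (U k' i $ a' $ b' - U (k'-1) i $ a' $ b')" if kk: "k' \<ge> 1" and i: "i \<in> {1..N-1}" for k' i a' b'
    proof -
      have st: "mu * deriv (act i) (U k' i $ a' $ b') * (V k' (i-1) $ a' $ b' + act i (U k' i $ a' $ b') - V (k'-1) i $ a' $ b')
          + beta i * (U k' i $ a' $ b' - (W k' i ** V k' (i-1)) $ a' $ b' - ((1/beta i) *\<^sub>R Lam (k'-1) i) $ a' $ b')
          + omega (k'-1) i * (U k' i $ a' $ b' - U (k'-1) i $ a' $ b') = 0"
        by (rule U_stationary) (use updU kk i dA1[OF i] in blast)+
      have up: "Lam k' i $ a' $ b' = Lam (k'-1) i $ a' $ b' + beta i * ((W k' i ** V k' (i-1)) $ a' $ b' - U k' i $ a' $ b')"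
        using updLam kk i by simp
      have e: "beta i * (U k' i $ a' $ b' - (W k' i ** V k' (i-1)) $ a' $ b' - ((1/beta i) *\<^sub>R Lam (k'-1) i) $ a' $ b')
          = beta i * U k' i $ a' $ b' - beta i * (W k' i ** V k' (i-1)) $ a' $ b' - Lam (k'-1) i $ a' $ b'"
        using bp[OF i] by (simp add: field_simps)
      show ?thesis using st up e by (simp add: algebra_simps)
    qed
    have LB: "dL i \<le> 4 * ((mu * a i + omega (k-1) i)^2 * dU i + (mu * psi1)^2 * dV (i-1) + (mu * psi1)^2 * dVo i + (omega (k-2) i)^2 * dUo i)"
      if i: "i \<in> {1..N-1}" for i
    proof -
      define w where "w = omega (k-1) i"
      define w' where "w' = omega (k-2) i"
      have w0: "w \<ge> 0" "w' \<ge> 0" using ob[OF i] PF[OF i] unfolding w_def w'_def by (meson less_le_not_le order_trans less_imp_le)+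
      have ent: "\<bar>(Lam k i - Lam (k-1) i) $ a' $ b'\<bar> \<le> (mu * a i + w) * \<bar>(U k i - U (k-1) i) $ a' $ b'\<bar>
           + (mu * psi1) * \<bar>(V k (i-1) - V (k-1) (i-1)) $ a' $ b'\<bar> + (mu * psi1) * \<bar>(V (k-1) i - V (k-2) i) $ a' $ b'\<bar>
           + w' * \<bar>(U (k-1) i - U (k-2) i) $ a' $ b'\<bar>" for a' b'
      proof -
        note l1 = lamform[OF k1(2) i, of a' b']
        note l2 = lamform[OF k1(1) i, of a' b']
        have G: "\<bar>deriv (act i) (U k i $ a' $ b') * (V k (i-1) $ a' $ b' + act i (U k i $ a' $ b') - V (k-1) i $ a' $ b')
             - deriv (act i) (U (k-1) i $ a' $ b') * (V (k-1) (i-1) $ a' $ b' + act i (U (k-1) i $ a' $ b') - V (k-2) i $ a' $ b')\<bar>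
           \<le> a i * \<bar>U k i $ a' $ b' - U (k-1) i $ a' $ b'\<bar> + psi1 * \<bar>V k (i-1) $ a' $ b' - V (k-1) (i-1) $ a' $ b'\<bar>
             + psi1 * \<bar>V (k-1) i $ a' $ b' - V (k-2) i $ a' $ b'\<bar>"
        proof -
          have b0: "\<forall>x. \<bar>act i x\<bar> \<le> psi0" using sigma_bd0 i by blast
          have b1: "\<forall>x. \<bar>deriv (act i) x\<bar> \<le> psi1" using sigma_bd1 i by blast
          have b2: "\<forall>x. \<bar>deriv (deriv (act i)) x\<bar> \<le> psi2" using sigma_bd2 i by blast
          have p2: "psi2 \<ge> 0" using psi_pos by simp
          note g = G_lip[OF dA1[OF i] dA2[OF i] b0 b1 b2 Vm1[OF i, of k a' b'] Vm[OF i, of "k-1" a' b'] p2,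
             where u = "U k i $ a' $ b'" and u' = "U (k-1) i $ a' $ b'" and x' = "V (k-1) (i-1) $ a' $ b'" and y' = "V (k-2) i $ a' $ b'"]
          have "a i = psi0 * psi2 + psi1^2 + Vmax i * psi2 + Vmax (i-1) * psi2" by (simp add: a_def a_par_def)
          then show ?thesis using g by simp
        qed
        define g1 where "g1 = deriv (act i) (U k i $ a' $ b') * (V k (i-1) $ a' $ b' + act i (U k i $ a' $ b') - V (k-1) i $ a' $ b')"
        define g2 where "g2 = deriv (act i) (U (k-1) i $ a' $ b') * (V (k-1) (i-1) $ a' $ b' + act i (U (k-1) i $ a' $ b') - V (k-2) i $ a' $ b')"
        have eqL: "(Lam k i - Lam (k-1) i) $ a' $ b' = mu * (g1 - g2) + w * (U k i $ a' $ b' - U (k-1) i $ a' $ b') - w' * (U (k-1) i $ a' $ b' - U (k-2) i $ a' $ b')"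
          using l1 l2 k1(3) unfolding g1_def g2_def w_def w'_def by (simp add: algebra_simps)
        have "\<bar>(Lam k i - Lam (k-1) i) $ a' $ b'\<bar> \<le> mu * \<bar>g1 - g2\<bar> + w * \<bar>U k i $ a' $ b' - U (k-1) i $ a' $ b'\<bar> + w' * \<bar>U (k-1) i $ a' $ b' - U (k-2) i $ a' $ b'\<bar>"
        proof -
          have t: "\<bar>p + q - r\<bar> \<le> \<bar>p\<bar> + \<bar>q\<bar> + \<bar>r\<bar>" for p q r :: real by arith
          have "\<bar>mu * (g1 - g2)\<bar> = mu * \<bar>g1 - g2\<bar>" using mu_pos by (simp add: abs_mult)
          moreover have "\<bar>w * (U k i $ a' $ b' - U (k-1) i $ a' $ b')\<bar> = w * \<bar>U k i $ a' $ b' - U (k-1) i $ a' $ b'\<bar>"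
            using w0 by (simp add: abs_mult)
          moreover have "\<bar>w' * (U (k-1) i $ a' $ b' - U (k-2) i $ a' $ b')\<bar> = w' * \<bar>U (k-1) i $ a' $ b' - U (k-2) i $ a' $ b'\<bar>"
            using w0 by (simp add: abs_mult)
          ultimately show ?thesis unfolding eqL
            using t[of "mu * (g1 - g2)" "w * (U k i $ a' $ b' - U (k-1) i $ a' $ b')" "w' * (U (k-1) i $ a' $ b' - U (k-2) i $ a' $ b')"]
            by linarith
        qed
        moreover have "mu * \<bar>g1 - g2\<bar> \<le> mu * (a i * \<bar>U k i $ a' $ b' - U (k-1) i $ a' $ b'\<bar> + psi1 * \<bar>V k (i-1) $ a' $ b' - V (k-1) (i-1) $ a' $ b'\<bar>
             + psi1 * \<bar>V (k-1) i $ a' $ b' - V (k-2) i $ a' $ b'\<bar>)"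
          using G mu_pos unfolding g1_def g2_def by (intro mult_left_mono) auto
        ultimately show ?thesis by (simp add: algebra_simps)
      qed
      have nb: "norm (Lam k i - Lam (k-1) i) \<le> (mu * a i + w) * norm (U k i - U (k-1) i)
           + (mu * psi1) * norm (V k (i-1) - V (k-1) (i-1)) + (mu * psi1) * norm (V (k-1) i - V (k-2) i)
           + w' * norm (U (k-1) i - U (k-2) i)"
        by (rule norm_entry_bound4[OF ent]) (use mu_pos psi_pos w0 a0[OF i] in auto)
      have "(norm (Lam k i - Lam (k-1) i))^2 \<le> 4 * (((mu * a i + w) * norm (U k i - U (k-1) i))^2
           + ((mu * psi1) * norm (V k (i-1) - V (k-1) (i-1)))^2 + ((mu * psi1) * norm (V (k-1) i - V (k-2) i))^2
           + (w' * norm (U (k-1) i - U (k-2) i))^2)"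
        by (rule sq4[OF _ _ _ _ nb]) (use mu_pos psi_pos w0 a0[OF i] in auto)
      then show ?thesis unfolding dL_def dU_def dV_def dVo_def dUo_def w_def w'_def
        by (simp add: power_mult_distrib)
    qed
    have dV0: "dV 0 = 0" unfolding dV_def using V0 by simp
    have dnn: "dU i \<ge> 0" "dUo i \<ge> 0" "dV i \<ge> 0" "dVo i \<ge> 0" "dW i \<ge> 0" "dL i \<ge> 0" for i
      unfolding dU_def dUo_def dV_def dVo_def dW_def dL_def by simp_all
    have dnn2: "dWN \<ge> 0" "dVN \<ge> 0" unfolding dWN_def dVN_def by simp_all
    have LNeq: "LamN k' = VN k' - Y" if kk: "k' \<ge> 1" for k'
    proof -
      have h: "(1 + beta N) *\<^sub>R VN k' = Y + beta N *\<^sub>R (WN k' ** V k' (N-1)) + LamN (k'-1)" using updVN kk bN by simp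
      have u: "LamN k' = LamN (k'-1) + beta N *\<^sub>R (WN k' ** V k' (N-1)) - beta N *\<^sub>R VN k'"
        using updLamN kk by (simp add: algebra_simps)
      have A: "LamN (k'-1) + beta N *\<^sub>R (WN k' ** V k' (N-1)) = (1 + beta N) *\<^sub>R VN k' - Y"
        using h by (simp add: algebra_simps)
      have "LamN k' = ((1 + beta N) *\<^sub>R VN k' - Y) - beta N *\<^sub>R VN k'" using u A by simp
      also have "\<dots> = VN k' - Y" by (simp add: scaleR_add_left)
      finally show ?thesis .
    qed
    have dLNe: "dLN = dVN" unfolding dLN_def dVN_def using LNeq[OF k1(2)] LNeq[OF k1(1)] by simp
    have LextN: "Lext N Y lam mu beta act theta eta (W k) (WN k) (U k) (V k) (VN k) (Lam k) (LamN k) (U (k-1)) (V (k-1))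
        = L3s N Y lam mu beta act (W k) (WN k) (U k) (V k) (VN k) (Lam k) (LamN k) + (\<Sum>i=1..N-1. theta i * dU i) + (\<Sum>i=1..N-1. eta i * dV i)"
      unfolding Lext_def dU_def dV_def by simp
    have LextO: "Lext N Y lam mu beta act theta eta (W (k-1)) (WN (k-1)) (U (k-1)) (V (k-1)) (VN (k-1)) (Lam (k-1)) (LamN (k-1)) (U (k-2)) (V (k-2))
        = L3s N Y lam mu beta act (W (k-1)) (WN (k-1)) (U (k-1)) (V (k-1)) (VN (k-1)) (Lam (k-1)) (LamN (k-1)) + (\<Sum>i=1..N-1. theta i * dUo i) + (\<Sum>i=1..N-1. eta i * dVo i)"
      unfolding Lext_def dUo_def dVo_def by simp
    have SL: "(\<Sum>i=1..N-1. dL i / beta i) \<le> (\<Sum>i=1..N-1. 4 * (mu * a i + omega (k-1) i)^2 / beta i * dU i)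
        + (\<Sum>i=1..N-1. (if i < N-1 then 4 * mu^2 * psi1^2 / beta (i+1) * dV i else 0))
        + (\<Sum>i=1..N-1. 4 * mu^2 * psi1^2 / beta i * dVo i) + (\<Sum>i=1..N-1. 4 * (omega (k-2) i)^2 / beta i * dUo i)"
    proof -
      have "(\<Sum>i=1..N-1. dL i / beta i) \<le> (\<Sum>i=1..N-1. 4 * (mu * a i + omega (k-1) i)^2 / beta i * dU i
          + 4 * mu^2 * psi1^2 / beta i * dV (i-1) + 4 * mu^2 * psi1^2 / beta i * dVo i + 4 * (omega (k-2) i)^2 / beta i * dUo i)"
      proof (rule sum_mono)
        fix i assume i: "i \<in> {1..N-1}"
        have "dL i / beta i \<le> 4 * ((mu * a i + omega (k-1) i)^2 * dU i + (mu * psi1)^2 * dV (i-1) + (mu * psi1)^2 * dVo i + (omega (k-2) i)^2 * dUo i) / beta i"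
          using LB[OF i] bp[OF i] by (simp add: divide_right_mono)
        also have "\<dots> = 4 * (mu * a i + omega (k-1) i)^2 / beta i * dU i
          + 4 * mu^2 * psi1^2 / beta i * dV (i-1) + 4 * mu^2 * psi1^2 / beta i * dVo i + 4 * (omega (k-2) i)^2 / beta i * dUo i"
          by (simp add: power_mult_distrib add_divide_distrib)
        finally show "dL i / beta i \<le> 4 * (mu * a i + omega (k-1) i)^2 / beta i * dU i
          + 4 * mu^2 * psi1^2 / beta i * dV (i-1) + 4 * mu^2 * psi1^2 / beta i * dVo i + 4 * (omega (k-2) i)^2 / beta i * dUo i" .
      qed
      moreover have "(\<Sum>i=1..N-1. 4 * mu^2 * psi1^2 / beta i * dV (i-1))
          = (\<Sum>i=1..N-1. (if i < N-1 then 4 * mu^2 * psi1^2 / beta (i+1) * dV i else 0))"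
        using shift_sum[of dV "N-1" "\<lambda>i. 4 * mu^2 * psi1^2 / beta i", OF dV0 N1(1)] by simp
      ultimately show ?thesis by (simp add: sum.distrib)
    qed
    define LHSi where "LHSi = (\<lambda>i. theta i * dU i - omega (k-1) i/2 * dU i + 4 * (mu * a i + omega (k-1) i)^2 / beta i * dU i
       + 4 * (omega (k-2) i)^2 / beta i * dUo i - theta i * dUo i
       + 4 * mu^2 * psi1^2 / beta i * dVo i - eta i * dVo i
       + eta i * dV i - (if i = N-1 then mu/2 else mu) * dV i + (if i < N-1 then 4 * mu^2 * psi1^2 / beta (i+1) * dV i else 0))"
    have KI: "LHSi i \<le> - c0 * (dU i + dUo i + dVo i + dV i)" if i: "i \<in> {1..N-1}" for i
    proof -
      have fa: "fI i \<le> 8 * (heps i)^2 / beta i" "fI i \<le> eps i" "fI i \<le> mu/4 - 4 * mu^2 * psi1^2 / beta i"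
        unfolding fI_def by auto
      have c0i: "c0 \<le> fI i" by (rule c0f[OF i])
      have w: "omin i < omega (k-1) i" "omega (k-1) i < omax i" using ob[OF i] by auto
      have w': "0 \<le> omega (k-2) i" "omega (k-2) i < omax i" using ob[OF i, of "k-2"] PF[OF i] by auto
      have cU: "theta i - omega (k-1) i/2 + 4 * (mu * a i + omega (k-1) i)^2 / beta i \<le> - c0"
      proof -
        have "theta i - omega (k-1) i/2 + 4 * (mu * a i + omega (k-1) i)^2 / beta i \<le> - 8 * (heps i)^2 / beta i"
          using PF[OF i] w by blast
        then show ?thesis using fa c0i by linarith
      qed
      have cUo: "4 * (omega (k-2) i)^2 / beta i - theta i \<le> - c0"
      proof -
        have "4 * (omega (k-2) i)^2 / beta i - theta i \<le> - eps i"
          using PF[OF i] w' by blast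
        then show ?thesis using fa c0i by linarith
      qed
      have X0: "4 * mu^2 * psi1^2 / beta i \<ge> 0" using bp[OF i] by simp
      have cVo: "4 * mu^2 * psi1^2 / beta i - eta i \<le> - c0"
        using fa c0i X0 unfolding eta_def by linarith
      have cV: "eta i - (if i = N-1 then mu/2 else mu) + (if i < N-1 then 4 * mu^2 * psi1^2 / beta (i+1) else 0) \<le> - c0"
      proof (cases "i = N-1")
        case True then show ?thesis using fa c0i unfolding eta_def by simp
      next
        case False
        then have i1: "i+1 \<in> {1..N-1}" "i < N-1" using i by auto
        show ?thesis using False i1 P4[OF i1(1)] P4[OF i] fa c0i X0 unfolding eta_def by simp
      qed
      have m1: "(theta i - omega (k-1) i/2 + 4 * (mu * a i + omega (k-1) i)^2 / beta i) * dU i \<le> - c0 * dU i"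
        using mult_right_mono[OF cU dnn(1)[of i]] by simp
      have m2: "(4 * (omega (k-2) i)^2 / beta i - theta i) * dUo i \<le> - c0 * dUo i"
        using mult_right_mono[OF cUo dnn(2)[of i]] by simp
      have m3: "(4 * mu^2 * psi1^2 / beta i - eta i) * dVo i \<le> - c0 * dVo i"
        using mult_right_mono[OF cVo dnn(4)[of i]] by simp
      have m4: "(eta i - (if i = N-1 then mu/2 else mu) + (if i < N-1 then 4 * mu^2 * psi1^2 / beta (i+1) else 0)) * dV i \<le> - c0 * dV i"
        using mult_right_mono[OF cV dnn(3)[of i]] by simp
      have eq: "LHSi i = (theta i - omega (k-1) i/2 + 4 * (mu * a i + omega (k-1) i)^2 / beta i) * dU i
          + (4 * (omega (k-2) i)^2 / beta i - theta i) * dUo i + (4 * mu^2 * psi1^2 / beta i - eta i) * dVo i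
          + (eta i - (if i = N-1 then mu/2 else mu) + (if i < N-1 then 4 * mu^2 * psi1^2 / beta (i+1) else 0)) * dV i"
        unfolding LHSi_def by (simp add: algebra_simps)
      have "- c0 * (dU i + dUo i + dVo i + dV i) = - c0 * dU i + - c0 * dUo i + - c0 * dVo i + - c0 * dV i"
        by (simp add: algebra_simps)
      then show ?thesis unfolding eq using m1 m2 m3 m4 by linarith
    qed
    have SumLHS: "(\<Sum>i=1..N-1. LHSi i) = (\<Sum>i=1..N-1. theta i * dU i) - (\<Sum>i=1..N-1. omega (k-1) i/2 * dU i)
        + (\<Sum>i=1..N-1. 4 * (mu * a i + omega (k-1) i)^2 / beta i * dU i)
        + (\<Sum>i=1..N-1. 4 * (omega (k-2) i)^2 / beta i * dUo i) - (\<Sum>i=1..N-1. theta i * dUo i)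
        + (\<Sum>i=1..N-1. 4 * mu^2 * psi1^2 / beta i * dVo i) - (\<Sum>i=1..N-1. eta i * dVo i)
        + (\<Sum>i=1..N-1. eta i * dV i) - (\<Sum>i=1..N-1. (if i = N-1 then mu/2 else mu) * dV i)
        + (\<Sum>i=1..N-1. (if i < N-1 then 4 * mu^2 * psi1^2 / beta (i+1) * dV i else 0))"
      unfolding LHSi_def by (simp only: sum.distrib sum_subtractf)
    have Scc: "(\<Sum>i=1..N-1. cc i) = (\<Sum>i=1..N-1. omega (k-1) i/2 * dU i) + (\<Sum>i=1..N-1. (if i = N-1 then mu/2 else mu) * dV i)"
      unfolding cc_def by (simp only: sum.distrib)
    have SKI: "(\<Sum>i=1..N-1. LHSi i) \<le> - c0 * ((\<Sum>i=1..N-1. dU i) + (\<Sum>i=1..N-1. dUo i) + (\<Sum>i=1..N-1. dVo i) + (\<Sum>i=1..N-1. dV i))"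
    proof -
      have "(\<Sum>i=1..N-1. LHSi i) \<le> (\<Sum>i=1..N-1. - c0 * (dU i + dUo i + dVo i + dV i))"
        by (rule sum_mono) (rule KI)
      also have "\<dots> = - c0 * ((\<Sum>i=1..N-1. dU i) + (\<Sum>i=1..N-1. dUo i) + (\<Sum>i=1..N-1. dVo i) + (\<Sum>i=1..N-1. dV i))"
        by (simp only: sum_negf sum_distrib_left[symmetric] sum.distrib mult_minus_left)
      finally show ?thesis .
    qed
    have SW: "(\<Sum>i=1..N-1. lam/2 * dW i) \<ge> c0 * (\<Sum>i=1..N-1. dW i)"
    proof -
      have "(\<Sum>i=1..N-1. lam/2 * dW i) = lam/2 * (\<Sum>i=1..N-1. dW i)" by (simp add: sum_distrib_left)
      moreover have "c0 * (\<Sum>i=1..N-1. dW i) \<le> lam/2 * (\<Sum>i=1..N-1. dW i)"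
        by (rule mult_right_mono[OF c0l(1)]) (simp add: sum_nonneg dnn)
      ultimately show ?thesis by simp
    qed
    have SWN: "c0 * dWN \<le> lam/2 * dWN" by (rule mult_right_mono[OF c0l(1) dnn2(1)])
    have SVN: "c0 * dVN \<le> (1 + beta N)/2 * dVN - dLN / beta N"
    proof -
      have "c0 * dVN \<le> ((1 + beta N)/2 - 1 / beta N) * dVN" by (rule mult_right_mono[OF c0l(2) dnn2(2)])
      also have "\<dots> = (1 + beta N)/2 * dVN - dLN / beta N" using dLNe by (simp add: algebra_simps)
      finally show ?thesis .
    qed
    define P where "P = (\<Sum>i=1..N-1. dW i) + dWN + (\<Sum>i=1..N-1. dU i) + (\<Sum>i=1..N-1. dV i) + dVN
        + (\<Sum>i=1..N-1. dUo i) + (\<Sum>i=1..N-1. dVo i)"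
    have cP: "c0 * P = c0 * (\<Sum>i=1..N-1. dW i) + c0 * dWN + c0 * dVN
        + c0 * ((\<Sum>i=1..N-1. dU i) + (\<Sum>i=1..N-1. dUo i) + (\<Sum>i=1..N-1. dVo i) + (\<Sum>i=1..N-1. dV i))"
      unfolding P_def by (simp add: algebra_simps)
    have Pmain: "Lext N Y lam mu beta act theta eta (W k) (WN k) (U k) (V k) (VN k) (Lam k) (LamN k) (U (k-1)) (V (k-1))
       \<le> Lext N Y lam mu beta act theta eta (W (k-1)) (WN (k-1)) (U (k-1)) (V (k-1)) (VN (k-1)) (Lam (k-1)) (LamN (k-1)) (U (k-2)) (V (k-2))
         - c0 * P"
      using LextN LextO D SL SumLHS Scc SKI SW SWN SVN cP by linarith
    have SLK: "(\<Sum>i=1..N-1. dL i) \<le> Kall * ((\<Sum>i=1..N-1. dU i) + (\<Sum>i=1..N-1. dV i) + (\<Sum>i=1..N-1. dVo i) + (\<Sum>i=1..N-1. dUo i))"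
    proof -
      have "(\<Sum>i=1..N-1. dL i) \<le> (\<Sum>i=1..N-1. Kall * dU i + Kall * (1 * dV (i-1)) + Kall * dVo i + Kall * dUo i)"
      proof (rule sum_mono)
        fix i assume i: "i \<in> {1..N-1}"
        have w: "omin i < omega (k-1) i" "omega (k-1) i < omax i" using ob[OF i] by auto
        have w': "0 \<le> omega (k-2) i" "omega (k-2) i < omax i" using ob[OF i, of "k-2"] PF[OF i] by auto
        have ma: "0 \<le> mu * a i" using mu_pos a0[OF i] by simp
        have q1: "(mu * a i + omega (k-1) i)^2 \<le> (mu * a i + omax i)^2"
          using w PF[OF i] ma by (intro power_mono) auto
        have q3: "(omega (k-2) i)^2 \<le> (omax i)^2" using w' by (intro power_mono) auto
        have K1: "4 * (mu * a i + omega (k-1) i)^2 \<le> Kall" "4 * (mu * psi1)^2 \<le> Kall" "4 * (omega (k-2) i)^2 \<le> Kall"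
        proof -
          have kk: "4 * (mu * a i + omax i)^2 + 4 * (mu * psi1)^2 + 4 * (omax i)^2 \<le> Kall"
            using KcK[OF i] unfolding Kc_def by (simp add: power_mult_distrib algebra_simps)
          have z: "(mu * a i + omax i)^2 \<ge> 0" "(mu * psi1)^2 \<ge> 0" "(omax i)^2 \<ge> 0" by simp_all
          show "4 * (mu * a i + omega (k-1) i)^2 \<le> Kall" "4 * (mu * psi1)^2 \<le> Kall" "4 * (omega (k-2) i)^2 \<le> Kall"
            using kk z q1 q3 by linarith+
        qed
        have "dL i \<le> 4 * (mu * a i + omega (k-1) i)^2 * dU i + 4 * (mu * psi1)^2 * dV (i-1) + 4 * (mu * psi1)^2 * dVo i + 4 * (omega (k-2) i)^2 * dUo i"
          using LB[OF i] by (simp add: algebra_simps)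
        moreover have "4 * (mu * a i + omega (k-1) i)^2 * dU i \<le> Kall * dU i" by (rule mult_right_mono[OF K1(1) dnn(1)])
        moreover have "4 * (mu * psi1)^2 * dV (i-1) \<le> Kall * dV (i-1)" by (rule mult_right_mono[OF K1(2) dnn(3)])
        moreover have "4 * (mu * psi1)^2 * dVo i \<le> Kall * dVo i" by (rule mult_right_mono[OF K1(2) dnn(4)])
        moreover have "4 * (omega (k-2) i)^2 * dUo i \<le> Kall * dUo i" by (rule mult_right_mono[OF K1(3) dnn(2)])
        ultimately show "dL i \<le> Kall * dU i + Kall * (1 * dV (i-1)) + Kall * dVo i + Kall * dUo i" by simp
      qed
      also have "\<dots> = Kall * ((\<Sum>i=1..N-1. dU i) + (\<Sum>i=1..N-1. 1 * dV (i-1)) + (\<Sum>i=1..N-1. dVo i) + (\<Sum>i=1..N-1. dUo i))"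
        by (simp only: sum.distrib sum_distrib_left[symmetric] distrib_left)
      also have "\<dots> \<le> Kall * ((\<Sum>i=1..N-1. dU i) + (\<Sum>i=1..N-1. dV i) + (\<Sum>i=1..N-1. dVo i) + (\<Sum>i=1..N-1. dUo i))"
      proof -
        have "(\<Sum>i=1..N-1. 1 * dV (i-1)) = (\<Sum>i=1..N-1. (if i < N-1 then 1 * dV i else 0))"
          by (rule shift_sum[of dV "N-1" "\<lambda>_. 1", OF dV0 N1(1)])
        also have "\<dots> \<le> (\<Sum>i=1..N-1. dV i)" by (rule sum_mono) (simp add: dnn)
        finally have "(\<Sum>i=1..N-1. 1 * dV (i-1)) \<le> (\<Sum>i=1..N-1. dV i)" .
        then show ?thesis using Kall0 by (intro mult_left_mono) auto
      qed
      finally show ?thesis .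
    qed
    define T where "T = (\<Sum>i=1..N-1. dW i) + dWN + (\<Sum>i=1..N-1. dU i) + (\<Sum>i=1..N-1. dV i) + dVN
        + (\<Sum>i=1..N-1. dL i) + dLN + (\<Sum>i=1..N-1. dUo i) + (\<Sum>i=1..N-1. dVo i)"
    have TP: "T \<le> (Kall + 2) * P"
    proof -
      have s0: "(\<Sum>i=1..N-1. dW i) \<ge> 0" "(\<Sum>i=1..N-1. dU i) \<ge> 0" "(\<Sum>i=1..N-1. dV i) \<ge> 0"
        "(\<Sum>i=1..N-1. dUo i) \<ge> 0" "(\<Sum>i=1..N-1. dVo i) \<ge> 0" by (simp_all add: sum_nonneg dnn)
      have "(\<Sum>i=1..N-1. dU i) + (\<Sum>i=1..N-1. dV i) + (\<Sum>i=1..N-1. dVo i) + (\<Sum>i=1..N-1. dUo i) \<le> P"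
        unfolding P_def using s0 dnn2 by linarith
      then have "Kall * ((\<Sum>i=1..N-1. dU i) + (\<Sum>i=1..N-1. dV i) + (\<Sum>i=1..N-1. dVo i) + (\<Sum>i=1..N-1. dUo i)) \<le> Kall * P"
        using Kall0 by (rule mult_left_mono)
      moreover have "(Kall + 2) * P = Kall * P + P + P" by (simp add: algebra_simps)
      moreover have "dVN \<le> P" unfolding P_def using s0 dnn2 by linarith
      ultimately show ?thesis unfolding T_def using SLK dLNe P_def by linarith
    qed
    have P0: "P \<ge> 0" unfolding P_def using dnn2 by (simp add: sum_nonneg dnn)
    have CT: "C * T \<le> c0 * P"
    proof -
      have "C * T \<le> C * ((Kall + 2) * P)" using Cp TP by (intro mult_left_mono) auto
      also have "\<dots> = c0 * P" unfolding C_def using Kall0 by simp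
      finally show ?thesis .
    qed
    have Teq: "T = (\<Sum>i=1..N-1. (norm (W k i - W (k-1) i))^2) + (norm (WN k - WN (k-1)))^2
            + (\<Sum>i=1..N-1. (norm (U k i - U (k-1) i))^2)
            + (\<Sum>i=1..N-1. (norm (V k i - V (k-1) i))^2) + (norm (VN k - VN (k-1)))^2
            + (\<Sum>i=1..N-1. (norm (Lam k i - Lam (k-1) i))^2) + (norm (LamN k - LamN (k-1)))^2
            + (\<Sum>i=1..N-1. (norm (U (k-1) i - U (k-2) i))^2)
            + (\<Sum>i=1..N-1. (norm (V (k-1) i - V (k-2) i))^2)"
      unfolding T_def dW_def dWN_def dU_def dV_def dVN_def dL_def dLN_def dUo_def dVo_def by simp
    show ?thesis using Pmain CT unfolding Teq[symmetric] by linarith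
  qed
  show ?thesis using Cp main by blast
qed


end
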